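(* Let $\psi$ be a 3-CNF formula and let $F_\psi$ be the signed digraph constructed from it as described in the context. Then $\psi$ is not satisfiable if and only if every Boolean network on $F_\psi$ is synchronizing.
   Context: $\psi$ is a 3-CNF formula over variables $\lambda_1,\dots,\lambda_n$ ($n\ge 2$) with clauses $\mu_1,\dots,\mu_m$ ($m\ge1$). Each variable $\lambda_r$ has literals $\lambda_r^+,\lambda_r^-$; each clause is a set of three literals written $\mu_s=\{\mu_{s,1},\mu_{s,2},\mu_{s,3}\}$ in a fixed order. $z\in\{0,1\}^n$ satisfies $\lambda_r^+$ if $z_r=1$ and $\lambda_r^-$ if $z_r=0$; $\psi$ is satisfiable if some $z$ satisfies a literal in every clause. $H_\psi$ is the signed digraph with vertices: all literals $\lambda_r^\pm$, $\ell_0,\dots,\ell_n$, $\mu'_1,\dots,\mu'_m$, $\mu_1,\dots,\mu_m$, $c_1,\dots,c_m$; arcs, for $r\in[n]$, $s\in[m]$: $(\ell_{r-1},\lambda_r^\pm)$, $(\lambda_r^\pm,\ell_r)$, $(c_1,\ell_0)$, $(\mu_{s,1},\mu'_s),(\mu_{s,2},\mu'_s),(\mu_{s,3},\mu_s),(\mu'_s,\mu_s)$ (with $\mu_{s,k}$ the literal vertex), $(\mu_s,c_s)$, $(c_{s+1},c_s)$ with $c_{m+1}=\ell_n$; the arcs $(\mu_s,c_s)$ are negative, all others positive. $F_\psi$ is obtained from $H_\psi$ by: adding a vertex $t$ and a positive arc $(t,i)$ for each literal vertex $i$; making the arc $(c_1,\ell_0)$ negative; deleting each arc $(\mu_s,c_s)$;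 and adding, for each $s\in[m]$, new vertices $q_s,q'_s$ with positive arcs $(\mu_s,q'_s),(\mu_s,q_s),(q'_s,q_s),(q_s,c_s)$. A signed digraph is $(V,E)$ with $E\subseteq V\times V\times\{-1,1\}$. A Boolean network (BN) is $f:\{0,1\}^V\to\{0,1\}^V$; its signed interaction digraph has a positive (negative) arc from $j$ to $i$ iff for some $x$ with $x_j=0$, $f_i(x+e_j)-f_i(x)$ is positive (negative); a BN on $G$ is one whose signed interaction digraph is $G$. $f^i(x)$ is $x$ with $x_i$ replaced by $f_i(x)$; $f^{i_1\cdots i_\ell}=f^{i_\ell}\circ\cdots\circ f^{i_1}$; $f$ is synchronizing if $f^w$ is constant for some word $w$. *)

theory Defs
  imports Main
begin

text \<open>A literal is a pair (r, b): (r, True) is the positive literal of variable r,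
  (r, False) the negative one. A clause is an ordered triple of literals
  (mu_{s,1}, mu_{s,2}, mu_{s,3}); a formula is a list of clauses mu_1 .. mu_m
  over variables 1..n.\<close>

type_synonym lit = "nat \<times> bool"
type_synonym clause = "lit \<times> lit \<times> lit"

definition cl1 :: "clause list \<Rightarrow> nat \<Rightarrow> lit" where
  "cl1 cs s = fst (cs ! (s - 1))"
definition cl2 :: "clause list \<Rightarrow> nat \<Rightarrow> lit" where
  "cl2 cs s = fst (snd (cs ! (s - 1)))"
definition cl3 :: "clause list \<Rightarrow> nat \<Rightarrow> lit" where
  "cl3 cs s = snd (snd (cs ! (s - 1)))"

definition wf_3cnf :: "nat \<Rightarrow> clause list \<Rightarrow> bool" where
  "wf_3cnf n cs \<longleftrightarrow> (\<forall>(a, b, c) \<in> set cs.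
      fst a \<in> {1..n} \<and> fst b \<in> {1..n} \<and> fst c \<in> {1..n} \<and>
      a \<noteq> b \<and> a \<noteq> c \<and> b \<noteq> c)"

definition sat_lit :: "(nat \<Rightarrow> bool) \<Rightarrow> lit \<Rightarrow> bool" where
  "sat_lit z l \<longleftrightarrow> z (fst l) = snd l"

definition satisfiable :: "nat \<Rightarrow> clause list \<Rightarrow> bool" where
  "satisfiable n cs \<longleftrightarrow> (\<exists>z :: nat \<Rightarrow> bool.
      \<forall>s \<in> {1..length cs}. sat_lit z (cl1 cs s) \<or> sat_lit z (cl2 cs s) \<or> sat_lit z (cl3 cs s))"

datatype vtx = Lit nat bool | Lv nat | MuP nat | Mu nat | Cv nat | Tv | Qv nat | QPv nat

definition litv :: "lit \<Rightarrow> vtx" where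
  "litv l = Lit (fst l) (snd l)"

definition H_verts :: "nat \<Rightarrow> clause list \<Rightarrow> vtx set" where
  "H_verts n cs = {Lit r b | r b. r \<in> {1..n}} \<union> Lv ` {0..n} \<union>
     MuP ` {1..length cs} \<union> Mu ` {1..length cs} \<union> Cv ` {1..length cs}"

text \<open>c_{m+1} = l_n\<close>
definition cnext :: "nat \<Rightarrow> clause list \<Rightarrow> nat \<Rightarrow> vtx" where
  "cnext n cs s = (if s = length cs then Lv n else Cv (s + 1))"

definition H_arcs :: "nat \<Rightarrow> clause list \<Rightarrow> (vtx \<times> vtx \<times> int) set" where
  "H_arcs n cs =
     {(Lv (r - 1), Lit r b, 1) | r b. r \<in> {1..n}} \<union>
     {(Lit r b, Lv r, 1) | r b. r \<in> {1..n}} \<union>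
     {(Cv 1, Lv 0, 1)} \<union>
     {(litv (cl1 cs s), MuP s, 1) | s. s \<in> {1..length cs}} \<union>
     {(litv (cl2 cs s), MuP s, 1) | s. s \<in> {1..length cs}} \<union>
     {(litv (cl3 cs s), Mu s, 1) | s. s \<in> {1..length cs}} \<union>
     {(MuP s, Mu s, 1) | s. s \<in> {1..length cs}} \<union>
     {(Mu s, Cv s, -1) | s. s \<in> {1..length cs}} \<union>
     {(cnext n cs s, Cv s, 1) | s. s \<in> {1..length cs}}"

definition F_verts :: "nat \<Rightarrow> clause list \<Rightarrow> vtx set" where
  "F_verts n cs = H_verts n cs \<union> {Tv} \<union> Qv ` {1..length cs} \<union> QPv ` {1..length cs}"

definition F_arcs :: "nat \<Rightarrow> clause list \<Rightarrow> (vtx \<times> vtx \<times> int) set" where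
  "F_arcs n cs =
     ((H_arcs n cs - {(Cv 1, Lv 0, 1)} - {(Mu s, Cv s, -1) | s. s \<in> {1..length cs}})
      \<union> {(Cv 1, Lv 0, -1)}
      \<union> {(Tv, Lit r b, 1) | r b. r \<in> {1..n}}
      \<union> {(Mu s, QPv s, 1) | s. s \<in> {1..length cs}}
      \<union> {(Mu s, Qv s, 1) | s. s \<in> {1..length cs}}
      \<union> {(QPv s, Qv s, 1) | s. s \<in> {1..length cs}}
      \<union> {(Qv s, Cv s, 1) | s. s \<in> {1..length cs}})"

text \<open>Configurations in {0,1}^V are represented by functions that are False outside V.
  A BN on V is a map f sending configurations to configurations (only its values on
  configurations matter).\<close>

definition states :: "'v set \<Rightarrow> ('v \<Rightarrow> bool) set" where
  "states V = {x. \<forall>v. v \<notin> V \<longrightarrow> \<not> x v}"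

definition is_BN :: "'v set \<Rightarrow> (('v \<Rightarrow> bool) \<Rightarrow> ('v \<Rightarrow> bool)) \<Rightarrow> bool" where
  "is_BN V f \<longleftrightarrow> (\<forall>x \<in> states V. f x \<in> states V)"

definition interaction_arcs :: "'v set \<Rightarrow> (('v \<Rightarrow> bool) \<Rightarrow> ('v \<Rightarrow> bool)) \<Rightarrow> ('v \<times> 'v \<times> int) set" where
  "interaction_arcs V f =
     {(j, i, 1) | j i. j \<in> V \<and> i \<in> V \<and>
        (\<exists>x \<in> states V. \<not> x j \<and> \<not> f x i \<and> f (x(j := True)) i)} \<union>
     {(j, i, -1) | j i. j \<in> V \<and> i \<in> V \<and>
        (\<exists>x \<in> states V. \<not> x j \<and> f x i \<and> \<not> f (x(j := True)) i)}"

definition BN_on :: "'v set \<Rightarrow> ('v \<times> 'v \<times> int) set \<Rightarrow> (('v \<Rightarrow> bool) \<Rightarrow> ('v \<Rightarrow> bool)) \<Rightarrow> bool" where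
  "BN_on V E f \<longleftrightarrow> is_BN V f \<and> interaction_arcs V f = E"

definition upd_at :: "(('v \<Rightarrow> bool) \<Rightarrow> ('v \<Rightarrow> bool)) \<Rightarrow> 'v \<Rightarrow> ('v \<Rightarrow> bool) \<Rightarrow> ('v \<Rightarrow> bool)" where
  "upd_at f i x = x(i := f x i)"

definition upd_word :: "(('v \<Rightarrow> bool) \<Rightarrow> ('v \<Rightarrow> bool)) \<Rightarrow> 'v list \<Rightarrow> ('v \<Rightarrow> bool) \<Rightarrow> ('v \<Rightarrow> bool)" where
  "upd_word f w x = foldl (\<lambda>y i. upd_at f i y) x w"

definition synchronizing :: "'v set \<Rightarrow> (('v \<Rightarrow> bool) \<Rightarrow> ('v \<Rightarrow> bool)) \<Rightarrow> bool" where
  "synchronizing V f \<longleftrightarrow>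
     (\<exists>w. set w \<subseteq> V \<and> (\<exists>c. \<forall>x \<in> states V. upd_word f w x = c))"

end

theory Submission
  imports Defs
begin

definition gate :: "bool \<Rightarrow> bool \<Rightarrow> bool \<Rightarrow> bool" where
  "gate b u v = (if b then u \<and> v else u \<or> v)"

lemma gate_same[simp]: "gate b u u = u" by (simp add: gate_def)
lemma gate_opp1[simp]: "gate b (\<not> v) v = (\<not> b)" by (auto simp: gate_def)
lemma gate_opp2[simp]: "gate b v (\<not> v) = (\<not> b)" by (auto simp: gate_def)

lemma states_upd: "x \<in> states V \<Longrightarrow> j \<in> V \<Longrightarrow> x(j := c) \<in> states V"
  by (auto simp: states_def)

lemma inter_char:
  "(j, i, sg) \<in> interaction_arcs V f \<longleftrightarrow> j \<in> V \<and> i \<in> V \<and>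
     ((sg = 1 \<and> (\<exists>x\<in>states V. \<not> x j \<and> \<not> f x i \<and> f (x(j := True)) i)) \<or>
      (sg = -1 \<and> (\<exists>x\<in>states V. \<not> x j \<and> f x i \<and> \<not> f (x(j := True)) i)))"
  unfolding interaction_arcs_def by auto

lemma locality_aux:
  assumes bn: "BN_on V E f" and fD: "finite D"
  shows "\<forall>x'. x \<in> states V \<longrightarrow> x' \<in> states V \<longrightarrow> {j. x j \<noteq> x' j} \<subseteq> D \<longrightarrow>
     (\<forall>j\<in>D. \<forall>sg. (j, i, sg) \<notin> E) \<longrightarrow> f x i = f x' i"
  using fD
proof (induction D rule: finite_induct)
  case empty
  then show ?case by auto
next
  case (insert j D)
  show ?case
  proof (intro allI impI)
    fix x' assume x: "x \<in> states V" and x': "x' \<in> states V"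
      and sub: "{j. x j \<noteq> x' j} \<subseteq> insert j D" and noarc: "\<forall>k\<in>insert j D. \<forall>sg. (k, i, sg) \<notin> E"
    show "f x i = f x' i"
    proof (cases "x j = x' j")
      case True
      then have "{k. x k \<noteq> x' k} \<subseteq> D" using sub by auto
      then show ?thesis using insert.IH[rule_format, OF x x'] noarc by blast
    next
      case False
      then have jV: "j \<in> V" using x x' by (auto simp: states_def)
      define x'' where "x'' = x'(j := x j)"
      have x''s: "x'' \<in> states V" using x' jV by (simp add: x''_def states_upd)
      have "{k. x k \<noteq> x'' k} \<subseteq> D" using sub by (auto simp: x''_def)
      then have e1: "f x i = f x'' i" using insert.IH[rule_format, OF x x''s] noarc by blast
      have "f x'' i = f x' i"
      proof (rule ccontr)
        assume ne: "f x'' i \<noteq> f x' i"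
        define z where "z = x'(j := False)"
        have zs: "z \<in> states V" using x' jV by (simp add: z_def states_upd)
        have "f z i \<noteq> f (z(j := True)) i"
        proof (cases "x j")
          case True
          then have "x' j = False" using False by simp
          then have "z = x'" "z(j := True) = x''" using True by (auto simp: z_def x''_def fun_upd_idem)
          then show ?thesis using ne by simp
        next
          case F: False
          then have "x' j = True" using False by simp
          then have "z = x''" "z(j := True) = x'" using F by (auto simp: z_def x''_def fun_upd_idem)
          then show ?thesis using ne by simp
        qed
        moreover have "\<not> z j" by (simp add: z_def)
        ultimately have "i \<in> V \<longrightarrow> (j, i, 1) \<in> interaction_arcs V f \<or> (j, i, -1) \<in> interaction_arcs V f"
          using zs jV unfolding inter_char by (cases "f z i") auto
        moreover have "i \<in> V"
        proof (rule ccontr)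
          assume "i \<notin> V"
          have "f z i = False" "f (z(j:=True)) i = False"
            using bn zs states_upd[OF zs jV] \<open>i \<notin> V\<close> unfolding BN_on_def is_BN_def states_def by auto
          then show False using \<open>f z i \<noteq> f (z(j := True)) i\<close> by simp
        qed
        ultimately show False using bn noarc unfolding BN_on_def by auto
      qed
      then show ?thesis using e1 by simp
    qed
  qed
qed

lemma locality:
  assumes bn: "BN_on V E f" and fin: "finite V"
    and x: "x \<in> states V" and x': "x' \<in> states V"
    and agree: "\<And>j. j \<in> V \<Longrightarrow> (\<exists>sg. (j, i, sg) \<in> E) \<Longrightarrow> x j = x' j"
  shows "f x i = f x' i"
proof -
  let ?D = "{j. x j \<noteq> x' j}"
  have sub: "?D \<subseteq> V" using x x' by (auto simp: states_def)
  then have "finite ?D" using fin finite_subset by blast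
  moreover have "\<forall>j\<in>?D. \<forall>sg. (j, i, sg) \<notin> E" using agree sub by blast
  ultimately show ?thesis using locality_aux[OF bn, of ?D x i] x x' by blast
qed


lemma BN_arcs: "BN_on V E f \<Longrightarrow> (j, i, sg) \<in> E \<longleftrightarrow> (j, i, sg) \<in> interaction_arcs V f"
  unfolding BN_on_def by auto

lemma shape2:
  assumes bn: "BN_on V E f" and fin: "finite V" and iV: "i \<in> V" and uV: "u \<in> V" and wV: "w \<in> V"
    and uw: "u \<noteq> w" and arcs: "\<And>j sg. (j, i, sg) \<in> E \<longleftrightarrow> sg = 1 \<and> (j = u \<or> j = w)"
  shows "\<exists>b. \<forall>x\<in>states V. f x i = gate b (x u) (x w)"
proof -
  define mk where "mk p q = (\<lambda>v. (v = u \<and> p) \<or> (v = w \<and> q))" for p q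
  have mks: "mk p q \<in> states V" for p q using uV wV by (auto simp: mk_def states_def)
  have mku: "mk p q u = p" "mk p q w = q" for p q using uw by (auto simp: mk_def)
  have loc: "f x i = f (mk (x u) (x w)) i" if "x \<in> states V" for x
    by (rule locality[OF bn fin that mks]) (auto simp: arcs mku)
  define h where "h p q = f (mk p q) i" for p q
  have upd1: "(mk p q)(u := True) = mk True q" for p q using uw by (auto simp: mk_def)
  have upd2: "(mk p q)(w := True) = mk p True" for p q using uw by (auto simp: mk_def)
  have "(u, i, -1) \<notin> E" using arcs by auto
  then have "\<not> (\<exists>x\<in>states V. \<not> x u \<and> f x i \<and> \<not> f (x(u := True)) i)"
    using BN_arcs[OF bn] iV uV unfolding inter_char by auto
  then have m1: "h False q \<longrightarrow> h True q" for q
    using mks[of False q] upd1[of False q] mku by (auto simp: h_def)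
  have "(w, i, -1) \<notin> E" using arcs by auto
  then have "\<not> (\<exists>x\<in>states V. \<not> x w \<and> f x i \<and> \<not> f (x(w := True)) i)"
    using BN_arcs[OF bn] iV wV unfolding inter_char by auto
  then have m2: "h p False \<longrightarrow> h p True" for p
    using mks[of p False] upd2[of p False] mku by (auto simp: h_def)
  have "(u, i, 1) \<in> E" using arcs by auto
  then obtain z where z: "z \<in> states V" "\<not> z u" "\<not> f z i" "f (z(u := True)) i"
    using BN_arcs[OF bn] unfolding inter_char by auto
  have "f z i = h False (z w)" using loc[OF z(1)] z(2) by (simp add: h_def)
  moreover have "f (z(u := True)) i = h True (z w)"
    using loc[OF states_upd[OF z(1) uV]] uw by (simp add: h_def)
  ultimately have e1: "\<exists>q. \<not> h False q \<and> h True q" using z by metis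
  have "(w, i, 1) \<in> E" using arcs by auto
  then obtain z' where z': "z' \<in> states V" "\<not> z' w" "\<not> f z' i" "f (z'(w := True)) i"
    using BN_arcs[OF bn] unfolding inter_char by auto
  have "f z' i = h (z' u) False" using loc[OF z'(1)] z'(2) by (simp add: h_def)
  moreover have "f (z'(w := True)) i = h (z' u) True"
    using loc[OF states_upd[OF z'(1) wV]] uw by (simp add: h_def)
  ultimately have e2: "\<exists>p. \<not> h p False \<and> h p True" using z' by metis
  obtain q0 where q0: "\<not> h False q0" "h True q0" using e1 by blast
  obtain p0 where p0: "\<not> h p0 False" "h p0 True" using e2 by blast
  define b where "b = (\<not> h True False)"
  have hg: "h p q = gate b p q" for p q unfolding b_def
    using m1[of False] m1[of True] m2[of False] m2[of True] q0 p0
    by (cases q0; cases p0; cases p; cases q) (auto simp: gate_def)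
  show ?thesis
  proof (intro exI ballI)
    fix x assume x: "x \<in> states V"
    have "f x i = h (x u) (x w)" unfolding h_def by (rule loc[OF x])
    then show "f x i = gate b (x u) (x w)" using hg by simp
  qed
qed

lemma shape1:
  assumes bn: "BN_on V E f" and fin: "finite V" and iV: "i \<in> V" and uV: "u \<in> V"
    and arcs: "\<And>j sg'. (j, i, sg') \<in> E \<longleftrightarrow> sg' = sg \<and> j = u" and sg: "sg = 1 \<or> sg = -1"
  shows "\<forall>x\<in>states V. f x i = (if sg = 1 then x u else \<not> x u)"
proof -
  define mk where "mk p = (\<lambda>v. v = u \<and> p)" for p
  have mks: "mk p \<in> states V" for p using uV by (auto simp: mk_def states_def)
  have mku: "mk p u = p" for p by (auto simp: mk_def)
  have loc: "f x i = f (mk (x u)) i" if "x \<in> states V" for x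
    by (rule locality[OF bn fin that mks]) (auto simp: arcs mku)
  have upd1: "(mk p)(u := True) = mk True" for p by (auto simp: mk_def fun_eq_iff)
  have "(u, i, sg) \<in> E" using arcs by auto
  then obtain z where z: "z \<in> states V" "\<not> z u" "(\<not> f z i \<and> f (z(u := True)) i \<and> sg = 1) \<or> (f z i \<and> \<not> f (z(u := True)) i \<and> sg = -1)"
    using BN_arcs[OF bn] sg unfolding inter_char by auto
  have "f z i = f (mk False) i" using loc[OF z(1)] z(2) by simp
  moreover have "f (z(u := True)) i = f (mk True) i"
    using loc[OF states_upd[OF z(1) uV]] by simp
  ultimately have v: "f (mk False) i = (sg \<noteq> 1)" "f (mk True) i = (sg = 1)" using z by auto
  show ?thesis
  proof
    fix x assume x: "x \<in> states V"
    have "f x i = f (mk (x u)) i" by (rule loc[OF x])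
    then show "f x i = (if sg = 1 then x u else \<not> x u)" using v by (cases "x u") auto
  qed
qed

lemma shape0:
  assumes bn: "BN_on V E f" and fin: "finite V" and arcs: "\<And>j sg'. (j, i, sg') \<notin> E"
  shows "\<forall>x\<in>states V. f x i = f (\<lambda>_. False) i"
proof -
  have s0: "(\<lambda>_. False) \<in> states V" by (simp add: states_def)
  show ?thesis using locality[OF bn fin _ s0] arcs by blast
qed

lemma gate_arcs:
  assumes iV: "i \<in> V" and uV: "u \<in> V" and wV: "w \<in> V" and uw: "u \<noteq> w"
    and f: "\<And>x. x \<in> states V \<Longrightarrow> f x i = gate b (x u) (x w)"
  shows "(j, i, sg) \<in> interaction_arcs V f \<longleftrightarrow> j \<in> V \<and> sg = 1 \<and> (j = u \<or> j = w)"
proof -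
  define mk where "mk p q = (\<lambda>v. (v = u \<and> p) \<or> (v = w \<and> q))" for p q
  have mks: "mk p q \<in> states V" for p q using uV wV by (auto simp: mk_def states_def)
  have mku: "mk p q u = p" "mk p q w = q" for p q using uw by (auto simp: mk_def)
  have upd1: "(mk p q)(u := True) = mk True q" for p q using uw by (auto simp: mk_def)
  have upd2: "(mk p q)(w := True) = mk p True" for p q using uw by (auto simp: mk_def)
  have pos_u: "(u, i, 1) \<in> interaction_arcs V f"
    unfolding inter_char using iV uV mks[of False b] f[OF mks[of False b]] f[OF mks[of True b]] upd1 mku
    by (intro conjI disjI1 bexI[of _ "mk False b"]) (auto simp: gate_def)
  have pos_w: "(w, i, 1) \<in> interaction_arcs V f"
    unfolding inter_char using iV wV mks[of b False] f[OF mks[of b False]] f[OF mks[of b True]] upd2 mku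
    by (intro conjI disjI1 bexI[of _ "mk b False"]) (auto simp: gate_def)
  have "\<not> (\<not> x j \<and> f x i \<and> \<not> f (x(j := True)) i)" if x: "x \<in> states V" and jV: "j \<in> V" for x j
    using f[OF x] f[OF states_upd[OF x jV]] by (cases "j = u"; cases "j = w") (auto simp: gate_def)
  moreover have "\<not> (\<not> x j \<and> \<not> f x i \<and> f (x(j := True)) i)" if x: "x \<in> states V" and jV: "j \<in> V"
     and "j \<noteq> u" "j \<noteq> w" for x j
    using f[OF x] f[OF states_upd[OF x jV]] that by (auto simp: gate_def)
  ultimately show ?thesis using pos_u pos_w uV wV unfolding inter_char by auto
qed

lemma copy_arcs:
  assumes iV: "i \<in> V" and uV: "u \<in> V"
    and f: "\<And>x. x \<in> states V \<Longrightarrow> f x i = (if sg = 1 then x u else \<not> x u)" and sg: "sg = 1 \<or> sg = -1"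
  shows "(j, i, sg') \<in> interaction_arcs V f \<longleftrightarrow> j \<in> V \<and> sg' = sg \<and> j = u"
proof -
  define mk where "mk p = (\<lambda>v. v = u \<and> p)" for p
  have mks: "mk p \<in> states V" for p using uV by (auto simp: mk_def states_def)
  have upd1: "(mk p)(u := True) = mk True" for p by (auto simp: mk_def fun_eq_iff)
  have mku: "mk p u = p" for p by (auto simp: mk_def)
  have v: "f (mk False) i = (sg \<noteq> 1)" "f (mk True) i = (sg = 1)"
    using f[OF mks[of False]] f[OF mks[of True]] mku by auto
  have pos_u: "(u, i, sg) \<in> interaction_arcs V f"
    unfolding inter_char using iV uV mks[of False] v upd1[of False] sg mku[of False]
    by (cases "sg = 1") (auto intro!: bexI[of _ "mk False"])
  have "f x i = f (x(j := True)) i" if x: "x \<in> states V" and jV: "j \<in> V" and "j \<noteq> u" for x j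
    using f[OF x] f[OF states_upd[OF x jV]] that by auto
  moreover have "\<not> (\<not> x u \<and> f x i \<and> \<not> f (x(u := True)) i)" if x: "x \<in> states V" "sg = 1" for x
    using f[OF x(1)] f[OF states_upd[OF x(1) uV]] that by auto
  moreover have "\<not> (\<not> x u \<and> \<not> f x i \<and> f (x(u := True)) i)" if x: "x \<in> states V" "sg = -1" for x
    using f[OF x(1)] f[OF states_upd[OF x(1) uV]] that by auto
  ultimately show ?thesis using pos_u uV sg unfolding inter_char by auto
qed

lemma const_arcs:
  assumes f: "\<And>x. x \<in> states V \<Longrightarrow> f x i = c"
  shows "(j, i, sg') \<notin> interaction_arcs V f"
  using f states_upd unfolding inter_char by fastforce

lemma Fv: "v \<in> F_verts n cs \<longleftrightarrow> (case v of Lit r b \<Rightarrow> r \<in> {1..n} | Lv r \<Rightarrow> r \<le> n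
   | MuP s \<Rightarrow> s \<in> {1..length cs} | Mu s \<Rightarrow> s \<in> {1..length cs} | Cv s \<Rightarrow> s \<in> {1..length cs}
   | Tv \<Rightarrow> True | Qv s \<Rightarrow> s \<in> {1..length cs} | QPv s \<Rightarrow> s \<in> {1..length cs})"
  by (cases v) (auto simp: F_verts_def H_verts_def)

lemma Fv_simps[simp]:
  "Lit r b \<in> F_verts n cs \<longleftrightarrow> r \<in> {1..n}"
  "Lv r \<in> F_verts n cs \<longleftrightarrow> r \<le> n"
  "MuP s \<in> F_verts n cs \<longleftrightarrow> s \<in> {1..length cs}"
  "Mu s \<in> F_verts n cs \<longleftrightarrow> s \<in> {1..length cs}"
  "Cv s \<in> F_verts n cs \<longleftrightarrow> s \<in> {1..length cs}"
  "Qv s \<in> F_verts n cs \<longleftrightarrow> s \<in> {1..length cs}"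
  "QPv s \<in> F_verts n cs \<longleftrightarrow> s \<in> {1..length cs}"
  "Tv \<in> F_verts n cs"
  by (simp_all add: Fv)

lemma finite_Fv: "finite (F_verts n cs)"
proof -
  have "F_verts n cs \<subseteq> (\<lambda>(r, b). Lit r b) ` ({1..n} \<times> UNIV) \<union> Lv ` {0..n} \<union> MuP ` {1..length cs}
     \<union> Mu ` {1..length cs} \<union> Cv ` {1..length cs} \<union> {Tv} \<union> Qv ` {1..length cs} \<union> QPv ` {1..length cs}"
    by (auto simp: F_verts_def H_verts_def)
  then show ?thesis by (rule finite_subset) simp
qed

lemma wf_cl:
  assumes wf: "wf_3cnf n cs" and s: "s \<in> {1..length cs}"
  shows "fst (cl1 cs s) \<in> {1..n}" "fst (cl2 cs s) \<in> {1..n}" "fst (cl3 cs s) \<in> {1..n}"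
    "cl1 cs s \<noteq> cl2 cs s" "cl1 cs s \<noteq> cl3 cs s" "cl2 cs s \<noteq> cl3 cs s"
proof -
  have "cs ! (s - 1) \<in> set cs" using s by auto
  then obtain a b c where abc: "cs ! (s - 1) = (a, b, c)" "(a, b, c) \<in> set cs" by (metis prod_cases3)
  then show "fst (cl1 cs s) \<in> {1..n}" "fst (cl2 cs s) \<in> {1..n}" "fst (cl3 cs s) \<in> {1..n}"
    "cl1 cs s \<noteq> cl2 cs s" "cl1 cs s \<noteq> cl3 cs s" "cl2 cs s \<noteq> cl3 cs s"
    using wf unfolding wf_3cnf_def cl1_def cl2_def cl3_def by auto
qed

lemma litv_inj[simp]: "litv l = litv l' \<longleftrightarrow> l = l'"
  by (cases l; cases l') (auto simp: litv_def)

lemma litv_Lit: "litv l = Lit (fst l) (snd l)" by (simp add: litv_def)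

lemma litv_Fv[simp]: "litv l \<in> F_verts n cs \<longleftrightarrow> fst l \<in> {1..n}" by (simp add: litv_def)

lemma litv_neq[simp]: "litv l \<noteq> MuP s" "litv l \<noteq> Mu s" "litv l \<noteq> Tv" "litv l \<noteq> Lv r"
  "litv l \<noteq> Cv s" "litv l \<noteq> Qv s" "litv l \<noteq> QPv s"
  by (simp_all add: litv_def)

lemma cnext_simps: "cnext n cs s = (if s = length cs then Lv n else Cv (s + 1))"
  by (simp add: cnext_def)

lemma Farcs_char:
  "(j, i, sg) \<in> F_arcs n cs \<longleftrightarrow> (case i of
     Tv \<Rightarrow> False
   | Lit r b \<Rightarrow> r \<in> {1..n} \<and> sg = 1 \<and> (j = Lv (r - 1) \<or> j = Tv)
   | Lv r \<Rightarrow> (if r = 0 then sg = -1 \<and> j = Cv 1 else r \<le> n \<and> sg = 1 \<and> (j = Lit r True \<or> j = Lit r False))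
   | MuP s \<Rightarrow> s \<in> {1..length cs} \<and> sg = 1 \<and> (j = litv (cl1 cs s) \<or> j = litv (cl2 cs s))
   | Mu s \<Rightarrow> s \<in> {1..length cs} \<and> sg = 1 \<and> (j = litv (cl3 cs s) \<or> j = MuP s)
   | QPv s \<Rightarrow> s \<in> {1..length cs} \<and> sg = 1 \<and> j = Mu s
   | Qv s \<Rightarrow> s \<in> {1..length cs} \<and> sg = 1 \<and> (j = Mu s \<or> j = QPv s)
   | Cv s \<Rightarrow> s \<in> {1..length cs} \<and> sg = 1 \<and> (j = Qv s \<or> j = cnext n cs s))"
proof (cases i)
  case (Lit r b) then show ?thesis
    by (cases b) (auto simp: F_arcs_def H_arcs_def cnext_def)
next
  case (Lv r) then show ?thesis
    by (auto simp: F_arcs_def H_arcs_def cnext_def)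
next
  case (Cv s) then show ?thesis
    by (auto simp: F_arcs_def H_arcs_def)
qed (auto simp: F_arcs_def H_arcs_def cnext_def)

locale net =
  fixes n :: nat and cs :: "clause list" and a :: bool
    and opL :: "nat \<Rightarrow> bool \<Rightarrow> bool" and opl opP opM opQ opC :: "nat \<Rightarrow> bool"
begin

definition gf :: "(vtx \<Rightarrow> bool) \<Rightarrow> vtx \<Rightarrow> bool" where
 "gf X v = (case v of Tv \<Rightarrow> a
   | Lit r b \<Rightarrow> gate (opL r b) (X (Lv (r - 1))) (X Tv)
   | Lv r \<Rightarrow> (if r = 0 then \<not> X (Cv 1) else gate (opl r) (X (Lit r True)) (X (Lit r False)))
   | MuP s \<Rightarrow> gate (opP s) (X (litv (cl1 cs s))) (X (litv (cl2 cs s)))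
   | Mu s \<Rightarrow> gate (opM s) (X (litv (cl3 cs s))) (X (MuP s))
   | QPv s \<Rightarrow> X (Mu s)
   | Qv s \<Rightarrow> gate (opQ s) (X (Mu s)) (X (QPv s))
   | Cv s \<Rightarrow> gate (opC s) (X (Qv s)) (X (cnext n cs s)))"

definition G :: "(vtx \<Rightarrow> bool) \<Rightarrow> vtx \<Rightarrow> bool" where
  "G X v = (v \<in> F_verts n cs \<and> gf X v)"

lemma G_states: "G X \<in> states (F_verts n cs)"
  by (simp add: G_def states_def)

lemma G_BN:
  assumes wf: "wf_3cnf n cs" and m1: "length cs \<ge> 1"
  shows "BN_on (F_verts n cs) (F_arcs n cs) G"
proof -
  let ?V = "F_verts n cs"
  have Gi: "G x i = gf x i" if "i \<in> ?V" for x i using that by (simp add: G_def)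
  have "(j, i, sg) \<in> interaction_arcs ?V G \<longleftrightarrow> (j, i, sg) \<in> F_arcs n cs" for j i sg
  proof (cases "i \<in> ?V")
    case False
    then show ?thesis unfolding Farcs_char inter_char
      by (cases i) (auto split: if_splits)
  next
    case iV: True
    show ?thesis
    proof (cases i)
      case Tv
      have "(j, i, sg) \<notin> interaction_arcs ?V G"
        by (rule const_arcs[of _ _ _ a]) (simp add: Gi iV Tv gf_def)
      then show ?thesis unfolding Farcs_char using Tv by simp
    next
      case (Lit r b)
      have r: "r \<in> {1..n}" using iV Lit by simp
      have "(j, i, sg) \<in> interaction_arcs ?V G \<longleftrightarrow> j \<in> ?V \<and> sg = 1 \<and> (j = Lv (r - 1) \<or> j = Tv)"
        by (rule gate_arcs[of _ _ _ _ _ "opL r b"]) (use iV r Lit in \<open>auto simp: Gi gf_def\<close>)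
      then show ?thesis unfolding Farcs_char using Lit r by auto
    next
      case (Lv r)
      show ?thesis
      proof (cases "r = 0")
        case True
        have "(j, i, sg) \<in> interaction_arcs ?V G \<longleftrightarrow> j \<in> ?V \<and> sg = -1 \<and> j = Cv 1"
          by (rule copy_arcs) (use iV True Lv m1 in \<open>auto simp: Gi gf_def\<close>)
        then show ?thesis unfolding Farcs_char using Lv True m1 by auto
      next
        case False
        have r: "r \<in> {1..n}" using iV Lv False by simp
        have "(j, i, sg) \<in> interaction_arcs ?V G \<longleftrightarrow> j \<in> ?V \<and> sg = 1 \<and> (j = Lit r True \<or> j = Lit r False)"
          by (rule gate_arcs[of _ _ _ _ _ "opl r"]) (use iV r Lv in \<open>auto simp: Gi gf_def\<close>)
        then show ?thesis unfolding Farcs_char using Lv r by auto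
      qed
    next
      case (MuP s)
      have s: "s \<in> {1..length cs}" using iV MuP by simp
      note w = wf_cl[OF wf s]
      have "(j, i, sg) \<in> interaction_arcs ?V G \<longleftrightarrow> j \<in> ?V \<and> sg = 1 \<and> (j = litv (cl1 cs s) \<or> j = litv (cl2 cs s))"
        by (rule gate_arcs[of _ _ _ _ _ "opP s"]) (use iV s MuP w in \<open>auto simp: Gi gf_def\<close>)
      then show ?thesis unfolding Farcs_char using MuP s w by auto
    next
      case (Mu s)
      have s: "s \<in> {1..length cs}" using iV Mu by simp
      note w = wf_cl[OF wf s]
      have "(j, i, sg) \<in> interaction_arcs ?V G \<longleftrightarrow> j \<in> ?V \<and> sg = 1 \<and> (j = litv (cl3 cs s) \<or> j = MuP s)"
        by (rule gate_arcs[of _ _ _ _ _ "opM s"]) (use iV s Mu w in \<open>auto simp: Gi gf_def\<close>)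
      then show ?thesis unfolding Farcs_char using Mu s w by auto
    next
      case (QPv s)
      have s: "s \<in> {1..length cs}" using iV QPv by simp
      have "(j, i, sg) \<in> interaction_arcs ?V G \<longleftrightarrow> j \<in> ?V \<and> sg = 1 \<and> j = Mu s"
        by (rule copy_arcs) (use iV s QPv in \<open>auto simp: Gi gf_def\<close>)
      then show ?thesis unfolding Farcs_char using QPv s by auto
    next
      case (Qv s)
      have s: "s \<in> {1..length cs}" using iV Qv by simp
      have "(j, i, sg) \<in> interaction_arcs ?V G \<longleftrightarrow> j \<in> ?V \<and> sg = 1 \<and> (j = Mu s \<or> j = QPv s)"
        by (rule gate_arcs[of _ _ _ _ _ "opQ s"]) (use iV s Qv in \<open>auto simp: Gi gf_def\<close>)
      then show ?thesis unfolding Farcs_char using Qv s by auto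
    next
      case (Cv s)
      have s: "s \<in> {1..length cs}" using iV Cv by simp
      have cn: "cnext n cs s \<in> ?V" "cnext n cs s \<noteq> Qv s" using s by (auto simp: cnext_def)
      have "(j, i, sg) \<in> interaction_arcs ?V G \<longleftrightarrow> j \<in> ?V \<and> sg = 1 \<and> (j = Qv s \<or> j = cnext n cs s)"
        by (rule gate_arcs[of _ _ _ _ _ "opC s"]) (use iV s Cv cn in \<open>auto simp: Gi gf_def\<close>)
      then show ?thesis unfolding Farcs_char using Cv s cn by auto
    qed
  qed
  then show ?thesis unfolding BN_on_def is_BN_def using G_states by auto
qed

end

lemma BN_is_net:
  assumes wf: "wf_3cnf n cs" and m1: "length cs \<ge> 1"
    and bn: "BN_on (F_verts n cs) (F_arcs n cs) f"
  shows "\<exists>a opL opl opP opM opQ opC. \<forall>x\<in>states (F_verts n cs). f x = net.G n cs a opL opl opP opM opQ opC x"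
proof -
  let ?V = "F_verts n cs"
  note fin = finite_Fv[of n cs]
  have isbn: "f x \<in> states ?V" if "x \<in> states ?V" for x using bn that unfolding BN_on_def is_BN_def by auto
  define a where "a = f (\<lambda>_. False) Tv"
  have fT: "\<forall>x\<in>states ?V. f x Tv = a"
    unfolding a_def by (rule shape0[OF bn fin]) (simp add: Farcs_char)
  have "\<forall>rb. \<exists>ob. fst rb \<in> {1..n} \<longrightarrow> (\<forall>x\<in>states ?V. f x (Lit (fst rb) (snd rb)) = gate ob (x (Lv (fst rb - 1))) (x Tv))"
  proof
    fix rb :: "nat \<times> bool"
    obtain r b where rb: "rb = (r, b)" by (cases rb)
    show "\<exists>ob. fst rb \<in> {1..n} \<longrightarrow> (\<forall>x\<in>states ?V. f x (Lit (fst rb) (snd rb)) = gate ob (x (Lv (fst rb - 1))) (x Tv))"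
    proof (cases "r \<in> {1..n}")
      case True
      have "\<exists>ob. \<forall>x\<in>states ?V. f x (Lit r b) = gate ob (x (Lv (r - 1))) (x Tv)"
        by (rule shape2[OF bn fin]) (use True in \<open>auto simp: Farcs_char\<close>)
      then show ?thesis using rb by auto
    qed (use rb in auto)
  qed
  then obtain oL where oL: "\<And>r b. r \<in> {1..n} \<Longrightarrow> \<forall>x\<in>states ?V. f x (Lit r b) = gate (oL (r, b)) (x (Lv (r - 1))) (x Tv)"
    by (metis choice fst_conv snd_conv)
  have "\<forall>r. \<exists>ob. r \<in> {1..n} \<longrightarrow> (\<forall>x\<in>states ?V. f x (Lv r) = gate ob (x (Lit r True)) (x (Lit r False)))"
  proof
    fix r
    show "\<exists>ob. r \<in> {1..n} \<longrightarrow> (\<forall>x\<in>states ?V. f x (Lv r) = gate ob (x (Lit r True)) (x (Lit r False)))"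
    proof (cases "r \<in> {1..n}")
      case True
      have "\<exists>ob. \<forall>x\<in>states ?V. f x (Lv r) = gate ob (x (Lit r True)) (x (Lit r False))"
        by (rule shape2[OF bn fin]) (use True in \<open>auto simp: Farcs_char\<close>)
      then show ?thesis by auto
    qed auto
  qed
  then obtain ol where ol: "\<And>r. r \<in> {1..n} \<Longrightarrow> \<forall>x\<in>states ?V. f x (Lv r) = gate (ol r) (x (Lit r True)) (x (Lit r False))"
    by (metis choice)
  have fL0: "\<forall>x\<in>states ?V. f x (Lv 0) = (\<not> x (Cv 1))"
    using shape1[OF bn fin, of "Lv 0" "Cv 1" "-1"] m1 by (auto simp: Farcs_char)
  have "\<forall>s. \<exists>ob. s \<in> {1..length cs} \<longrightarrow> (\<forall>x\<in>states ?V. f x (MuP s) = gate ob (x (litv (cl1 cs s))) (x (litv (cl2 cs s))))"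
  proof
    fix s
    show "\<exists>ob. s \<in> {1..length cs} \<longrightarrow> (\<forall>x\<in>states ?V. f x (MuP s) = gate ob (x (litv (cl1 cs s))) (x (litv (cl2 cs s))))"
    proof (cases "s \<in> {1..length cs}")
      case True
      note w = wf_cl[OF wf True]
      have "\<exists>ob. \<forall>x\<in>states ?V. f x (MuP s) = gate ob (x (litv (cl1 cs s))) (x (litv (cl2 cs s)))"
        by (rule shape2[OF bn fin]) (use True w in \<open>auto simp: Farcs_char\<close>)
      then show ?thesis by auto
    qed auto
  qed
  then obtain oP where oP: "\<And>s. s \<in> {1..length cs} \<Longrightarrow> \<forall>x\<in>states ?V. f x (MuP s) = gate (oP s) (x (litv (cl1 cs s))) (x (litv (cl2 cs s)))"
    by (metis choice)
  have "\<forall>s. \<exists>ob. s \<in> {1..length cs} \<longrightarrow> (\<forall>x\<in>states ?V. f x (Mu s) = gate ob (x (litv (cl3 cs s))) (x (MuP s)))"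
  proof
    fix s
    show "\<exists>ob. s \<in> {1..length cs} \<longrightarrow> (\<forall>x\<in>states ?V. f x (Mu s) = gate ob (x (litv (cl3 cs s))) (x (MuP s)))"
    proof (cases "s \<in> {1..length cs}")
      case True
      note w = wf_cl[OF wf True]
      have "\<exists>ob. \<forall>x\<in>states ?V. f x (Mu s) = gate ob (x (litv (cl3 cs s))) (x (MuP s))"
        by (rule shape2[OF bn fin]) (use True w in \<open>auto simp: Farcs_char\<close>)
      then show ?thesis by auto
    qed auto
  qed
  then obtain oM where oM: "\<And>s. s \<in> {1..length cs} \<Longrightarrow> \<forall>x\<in>states ?V. f x (Mu s) = gate (oM s) (x (litv (cl3 cs s))) (x (MuP s))"
    by (metis choice)
  have "\<forall>s. \<exists>ob. s \<in> {1..length cs} \<longrightarrow> (\<forall>x\<in>states ?V. f x (Qv s) = gate ob (x (Mu s)) (x (QPv s)))"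
  proof
    fix s
    show "\<exists>ob. s \<in> {1..length cs} \<longrightarrow> (\<forall>x\<in>states ?V. f x (Qv s) = gate ob (x (Mu s)) (x (QPv s)))"
    proof (cases "s \<in> {1..length cs}")
      case True
      have "\<exists>ob. \<forall>x\<in>states ?V. f x (Qv s) = gate ob (x (Mu s)) (x (QPv s))"
        by (rule shape2[OF bn fin]) (use True in \<open>auto simp: Farcs_char\<close>)
      then show ?thesis by auto
    qed auto
  qed
  then obtain oQ where oQ: "\<And>s. s \<in> {1..length cs} \<Longrightarrow> \<forall>x\<in>states ?V. f x (Qv s) = gate (oQ s) (x (Mu s)) (x (QPv s))"
    by (metis choice)
  have "\<forall>s. \<exists>ob. s \<in> {1..length cs} \<longrightarrow> (\<forall>x\<in>states ?V. f x (Cv s) = gate ob (x (Qv s)) (x (cnext n cs s)))"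
  proof
    fix s
    show "\<exists>ob. s \<in> {1..length cs} \<longrightarrow> (\<forall>x\<in>states ?V. f x (Cv s) = gate ob (x (Qv s)) (x (cnext n cs s)))"
    proof (cases "s \<in> {1..length cs}")
      case True
      have cn: "cnext n cs s \<in> ?V" "cnext n cs s \<noteq> Qv s" using True by (auto simp: cnext_def)
      have "\<exists>ob. \<forall>x\<in>states ?V. f x (Cv s) = gate ob (x (Qv s)) (x (cnext n cs s))"
        by (rule shape2[OF bn fin]) (use True cn in \<open>auto simp: Farcs_char\<close>)
      then show ?thesis by auto
    qed auto
  qed
  then obtain oC where oC: "\<And>s. s \<in> {1..length cs} \<Longrightarrow> \<forall>x\<in>states ?V. f x (Cv s) = gate (oC s) (x (Qv s)) (x (cnext n cs s))"
    by (metis choice)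
  have fQP: "s \<in> {1..length cs} \<Longrightarrow> \<forall>x\<in>states ?V. f x (QPv s) = x (Mu s)" for s
    using shape1[OF bn fin, of "QPv s" "Mu s" 1] by (auto simp: Farcs_char)
  show ?thesis
  proof (intro exI ballI ext)
    fix x v assume x: "x \<in> states ?V"
    show "f x v = net.G n cs a (\<lambda>r b. oL (r, b)) ol oP oM oQ oC x v"
    proof (cases "v \<in> ?V")
      case False
      then show ?thesis using isbn[OF x] by (simp add: net.G_def states_def)
    next
      case True
      then show ?thesis
        using x fT oL ol fL0 oP oM oQ oC fQP
        by (cases v) (auto simp: net.G_def net.gf_def)
    qed
  qed
qed

lemma upd_word_Cons: "upd_word f (i # w) x = upd_word f w (upd_at f i x)"
  by (simp add: upd_word_def)

lemma upd_word_Nil: "upd_word f [] x = x"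
  by (simp add: upd_word_def)

lemma upd_word_append: "upd_word f (u @ w) x = upd_word f w (upd_word f u x)"
  by (simp add: upd_word_def)

lemma upd_word_rel:
  assumes "\<And>i x x'. i \<in> set w \<Longrightarrow> P x x' \<Longrightarrow> P (upd_at f i x) (upd_at f i x')" and "P x x'"
  shows "P (upd_word f w x) (upd_word f w x')"
  using assms by (induction w arbitrary: x x') (auto simp: upd_word_Cons upd_word_Nil)

lemma upd_at_states:
  assumes "x \<in> states V" "f x \<in> states V" shows "upd_at f i x \<in> states V"
  using assms by (auto simp: upd_at_def states_def)

lemma upd_word_transfer:
  assumes fg: "\<forall>x\<in>states V. f x = g x" and gs: "\<forall>x\<in>states V. g x \<in> states V" and x: "x \<in> states V"
  shows "upd_word f w x = upd_word g w x"
  using x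
proof (induction w arbitrary: x)
  case Nil then show ?case by (simp add: upd_word_Nil)
next
  case (Cons i w)
  have "upd_at f i x = upd_at g i x" using fg Cons.prems by (simp add: upd_at_def)
  moreover have "upd_at g i x \<in> states V" using upd_at_states[OF Cons.prems] gs Cons.prems by blast
  ultimately show ?case using Cons.IH by (simp add: upd_word_Cons)
qed

lemma sync_transfer:
  assumes fg: "\<forall>x\<in>states V. f x = g x" and gs: "\<forall>x\<in>states V. g x \<in> states V"
  shows "synchronizing V f \<longleftrightarrow> synchronizing V g"
  unfolding synchronizing_def using upd_word_transfer[OF fg gs] by auto

definition zops where "zops z = (\<lambda>r b. z r \<noteq> b)"

lemma sat_nonsync:
  assumes wf: "wf_3cnf n cs" and m1: "length cs \<ge> 1"
    and z: "\<forall>s\<in>{1..length cs}. sat_lit z (cl1 cs s) \<or> sat_lit z (cl2 cs s) \<or> sat_lit z (cl3 cs s)"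
  shows "\<not> synchronizing (F_verts n cs) (net.G n cs True (zops z) (\<lambda>_. True) (\<lambda>_. False) (\<lambda>_. False) (\<lambda>_. True) (\<lambda>_. True))"
proof
  let ?V = "F_verts n cs"
  let ?m = "length cs"
  define g where "g = net.G n cs True (zops z) (\<lambda>_. True) (\<lambda>_. False) (\<lambda>_. False) (\<lambda>_. True) (\<lambda>_. True)"
  have gv: "v \<in> ?V \<Longrightarrow> g x v = net.gf n cs True (zops z) (\<lambda>_. True) (\<lambda>_. False) (\<lambda>_. False) (\<lambda>_. True) (\<lambda>_. True) x v" for x v
    by (simp add: g_def net.G_def)
  have gnv: "v \<notin> ?V \<Longrightarrow> g x v = False" for x v by (simp add: g_def net.G_def)
  define C where "C v \<longleftrightarrow> (\<exists>r\<le>n. v = Lv r) \<or> (\<exists>r\<in>{1..n}. v = Lit r (\<not> z r)) \<or> (\<exists>s\<in>{1..?m}. v = Cv s)" for v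
  define S where "S x \<longleftrightarrow> x \<in> states ?V \<and> x Tv \<and> (\<forall>r\<in>{1..n}. x (Lit r (z r))) \<and>
     (\<forall>s\<in>{1..?m}. x (Mu s) \<and> x (QPv s) \<and> x (Qv s) \<and> ((sat_lit z (cl1 cs s) \<or> sat_lit z (cl2 cs s)) \<longrightarrow> x (MuP s)))" for x
  define R where "R x x' \<longleftrightarrow> S x \<and> S x' \<and> (\<forall>v. C v \<longrightarrow> x' v = (\<not> x v))" for x x'
  have satlit: "sat_lit z l \<Longrightarrow> litv l = Lit (fst l) (z (fst l))" for l by (simp add: sat_lit_def litv_def)
  have step: "R (upd_at g i x) (upd_at g i x')" if R: "R x x'" for i x x'
  proof (cases "i \<in> ?V")
    case False
    have "upd_at g i y = y" if "S y" for y
      using that False gnv unfolding S_def states_def upd_at_def by (auto simp: fun_upd_idem)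
    then show ?thesis using R unfolding R_def by auto
  next
    case iV: True
    have Sx: "S x" and Sx': "S x'" and Cx: "\<And>v. C v \<Longrightarrow> x' v = (\<not> x v)" using R by (auto simp: R_def)
    have sx: "x \<in> states ?V" "x' \<in> states ?V" using Sx Sx' by (auto simp: S_def)
    have xT: "x Tv" "x' Tv" using Sx Sx' by (auto simp: S_def)
    have xL: "\<And>r. r \<in> {1..n} \<Longrightarrow> x (Lit r (z r)) \<and> x' (Lit r (z r))" using Sx Sx' by (auto simp: S_def)
    have xM: "\<And>s. s \<in> {1..?m} \<Longrightarrow> x (Mu s) \<and> x' (Mu s) \<and> x (QPv s) \<and> x' (QPv s) \<and> x (Qv s) \<and> x' (Qv s)"
      using Sx Sx' by (auto simp: S_def)
    have xP: "\<And>s. s \<in> {1..?m} \<Longrightarrow> sat_lit z (cl1 cs s) \<or> sat_lit z (cl2 cs s) \<Longrightarrow> x (MuP s) \<and> x' (MuP s)"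
      using Sx Sx' by (auto simp: S_def)
    define u where "u = g x i"
    define u' where "u' = g x' i"
    have gen: "R (x(i := u)) (x'(i := u'))"
      if SC: "\<not> C i \<Longrightarrow> S (x(i := u)) \<and> S (x'(i := u'))" and CC: "C i \<Longrightarrow> u' = (\<not> u)"
        and CS: "C i \<Longrightarrow> S (x(i := u)) \<and> S (x'(i := u'))"
      using SC CC CS Cx by (cases "C i") (auto simp: R_def)
    have Snc: "S (y(i := c))" if "S y" "\<not> (i = Tv \<or> (\<exists>r\<in>{1..n}. i = Lit r (z r)) \<or> (\<exists>s\<in>{1..?m}. i = Mu s \<or> i = QPv s \<or> i = Qv s \<or> (i = MuP s \<and> (sat_lit z (cl1 cs s) \<or> sat_lit z (cl2 cs s)))))" for y c
      using that iV unfolding S_def states_def by auto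
    have Str: "S (y(i := True))" if "S y" for y
      using that iV unfolding S_def states_def by auto
    show ?thesis
    proof (cases i)
      case Tv
      then have "u = True" "u' = True" unfolding u_def u'_def gv[OF iV] by (simp_all add: net.gf_def)
      then show ?thesis unfolding upd_at_def u_def[symmetric] u'_def[symmetric]
        using Str Sx Sx' by (intro gen) (auto simp: Tv C_def)
    next
      case (Lit r b)
      have r: "r \<in> {1..n}" using iV Lit by simp
      show ?thesis
      proof (cases "b = z r")
        case True
        then have "u = True" "u' = True" using xT unfolding u_def u'_def gv[OF iV] by (simp_all add: Lit r net.gf_def zops_def gate_def)
        then show ?thesis unfolding upd_at_def u_def[symmetric] u'_def[symmetric]
          using Str Sx Sx' True by (intro gen) (auto simp: Lit C_def)
      next
        case False
        then have b: "b = (\<not> z r)" by auto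
        have "u = x (Lv (r - 1))" "u' = x' (Lv (r - 1))" using xT b
          unfolding u_def u'_def gv[OF iV] by (simp_all add: Lit r net.gf_def zops_def gate_def)
        moreover have "C (Lv (r - 1))" using r unfolding C_def by (intro disjI1 exI[of _ "r - 1"]) auto
        then have "x' (Lv (r - 1)) = (\<not> x (Lv (r - 1)))" using Cx by blast
        moreover have "S (x(i := c))" "S (x'(i := c))" for c
          using Snc[OF Sx] Snc[OF Sx'] b Lit r by auto
        ultimately show ?thesis unfolding upd_at_def u_def[symmetric] u'_def[symmetric]
          by (intro gen) auto
      qed
    next
      case (Lv r)
      have r: "r \<le> n" using iV Lv by simp
      have SS: "S (x(i := c))" "S (x'(i := c))" for c using Snc[OF Sx] Snc[OF Sx'] Lv by auto
      show ?thesis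
      proof (cases "r = 0")
        case True
        have "u = (\<not> x (Cv 1))" "u' = (\<not> x' (Cv 1))"
          unfolding u_def u'_def gv[OF iV] by (simp_all add: Lv True net.gf_def)
        moreover have "x' (Cv 1) = (\<not> x (Cv 1))" using Cx[of "Cv 1"] m1 by (auto simp: C_def)
        ultimately show ?thesis unfolding upd_at_def u_def[symmetric] u'_def[symmetric]
          using SS by (intro gen) auto
      next
        case False
        then have r1: "r \<in> {1..n}" using r by simp
        have gvs: "g y i = gate True (y (Lit r True)) (y (Lit r False))" for y
          unfolding gv[OF iV] using Lv False by (simp add: net.gf_def)
        have "u = x (Lit r (\<not> z r))" "u' = x' (Lit r (\<not> z r))"
          unfolding u_def u'_def gvs using xL[OF r1] by (cases "z r"; simp add: gate_def)+
        moreover have "C (Lit r (\<not> z r))" using r1 unfolding C_def by blast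
        then have "x' (Lit r (\<not> z r)) = (\<not> x (Lit r (\<not> z r)))" using Cx by blast
        ultimately show ?thesis unfolding upd_at_def u_def[symmetric] u'_def[symmetric]
          using SS by (intro gen) auto
      qed
    next
      case (MuP s)
      have s: "s \<in> {1..?m}" using iV MuP by simp
      have nC: "\<not> C i" using MuP by (auto simp: C_def)
      show ?thesis
      proof (cases "sat_lit z (cl1 cs s) \<or> sat_lit z (cl2 cs s)")
        case True
        have xlit: "x (litv l) \<and> x' (litv l)" if "sat_lit z l" "fst l \<in> {1..n}" for l
          using satlit[OF that(1)] xL[OF that(2)] by simp
        have "x (litv (cl1 cs s)) \<or> x (litv (cl2 cs s))" "x' (litv (cl1 cs s)) \<or> x' (litv (cl2 cs s))"
          using True xlit wf_cl[OF wf s] by blast+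
        then have "u = True" "u' = True" unfolding u_def u'_def gv[OF iV] by (simp_all add: MuP s net.gf_def gate_def)
        then show ?thesis unfolding upd_at_def u_def[symmetric] u'_def[symmetric]
          using Str Sx Sx' nC by (intro gen) auto
      next
        case False
        have "S (x(i := c))" "S (x'(i := c))" for c
          using Snc[OF Sx] Snc[OF Sx'] False MuP by auto
        then show ?thesis unfolding upd_at_def u_def[symmetric] u'_def[symmetric]
          using nC by (intro gen) auto
      qed
    next
      case (Mu s)
      have s: "s \<in> {1..?m}" using iV Mu by simp
      have nC: "\<not> C i" using Mu by (auto simp: C_def)
      have "x (litv (cl3 cs s)) \<or> x (MuP s)" "x' (litv (cl3 cs s)) \<or> x' (MuP s)"
      proof -
        have "sat_lit z (cl1 cs s) \<or> sat_lit z (cl2 cs s) \<or> sat_lit z (cl3 cs s)" using z s by blast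
        then consider "sat_lit z (cl1 cs s) \<or> sat_lit z (cl2 cs s)" | "sat_lit z (cl3 cs s)" by blast
        then have "(x (litv (cl3 cs s)) \<or> x (MuP s)) \<and> (x' (litv (cl3 cs s)) \<or> x' (MuP s))"
        proof cases
          case 1 then show ?thesis
            using xP[OF s] by auto
        next
          case 2
          then have "litv (cl3 cs s) = Lit (fst (cl3 cs s)) (z (fst (cl3 cs s)))" by (rule satlit)
          moreover have "fst (cl3 cs s) \<in> {1..n}" using wf_cl[OF wf s] by simp
          ultimately show ?thesis
            using xL by auto
        qed
        then show "x (litv (cl3 cs s)) \<or> x (MuP s)" "x' (litv (cl3 cs s)) \<or> x' (MuP s)" by auto
      qed
      then have "u = True" "u' = True" unfolding u_def u'_def gv[OF iV] by (simp_all add: Mu s net.gf_def gate_def)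
      then show ?thesis unfolding upd_at_def u_def[symmetric] u'_def[symmetric]
        using Str Sx Sx' nC by (intro gen) auto
    next
      case (QPv s)
      have s: "s \<in> {1..?m}" using iV QPv by simp
      have nC: "\<not> C i" using QPv by (auto simp: C_def)
      have "u = True" "u' = True" using xM[OF s] unfolding u_def u'_def gv[OF iV] by (simp_all add: QPv s net.gf_def)
      then show ?thesis unfolding upd_at_def u_def[symmetric] u'_def[symmetric]
        using Str Sx Sx' nC by (intro gen) auto
    next
      case (Qv s)
      have s: "s \<in> {1..?m}" using iV Qv by simp
      have nC: "\<not> C i" using Qv by (auto simp: C_def)
      have "u = True" "u' = True" using xM[OF s] unfolding u_def u'_def gv[OF iV] by (simp_all add: Qv s net.gf_def gate_def)
      then show ?thesis unfolding upd_at_def u_def[symmetric] u'_def[symmetric]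
        using Str Sx Sx' nC by (intro gen) auto
    next
      case (Cv s)
      have s: "s \<in> {1..?m}" using iV Cv by simp
      have SS: "S (x(i := c))" "S (x'(i := c))" for c using Snc[OF Sx] Snc[OF Sx'] Cv by auto
      have "u = x (cnext n cs s)" "u' = x' (cnext n cs s)" using xM[OF s]
        unfolding u_def u'_def gv[OF iV] by (simp_all add: Cv s net.gf_def gate_def)
      moreover have "C (cnext n cs s)" using s by (auto simp: C_def cnext_def)
      ultimately show ?thesis unfolding upd_at_def u_def[symmetric] u'_def[symmetric]
        using SS Cx by (intro gen) auto
    qed
  qed
  assume "synchronizing ?V (net.G n cs True (zops z) (\<lambda>_. True) (\<lambda>_. False) (\<lambda>_. False) (\<lambda>_. True) (\<lambda>_. True))"
  then obtain w c where wc: "\<forall>x\<in>states ?V. upd_word g w x = c" unfolding synchronizing_def g_def by blast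
  define x0 where "x0 = (\<lambda>v. v \<in> ?V)"
  define x1 where "x1 = (\<lambda>v. v \<in> ?V \<and> \<not> C v)"
  have CV: "C v \<Longrightarrow> v \<in> ?V" for v by (auto simp: C_def)
  have Rx: "R x0 x1" unfolding R_def S_def x0_def x1_def states_def using CV
    by (auto simp: C_def)
  have st: "\<And>i x x'. i \<in> set w \<Longrightarrow> R x x' \<Longrightarrow> R (upd_at g i x) (upd_at g i x')" using step by blast
  have "R (upd_word g w x0) (upd_word g w x1)" by (rule upd_word_rel[where P = R, OF st Rx])
  moreover have "upd_word g w x0 = c" "upd_word g w x1 = c"
    using wc by (auto simp: x0_def x1_def states_def)
  ultimately have "R c c" by simp
  moreover have "C (Lv 0)" unfolding C_def by auto
  ultimately show False unfolding R_def by blast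
qed

context net begin

abbreviation VV where "VV \<equiv> F_verts n cs"
abbreviation mm where "mm \<equiv> length cs"

definition inp :: "vtx \<Rightarrow> vtx set" where
 "inp v = (case v of Tv \<Rightarrow> {}
   | Lit r b \<Rightarrow> {Lv (r - 1), Tv}
   | Lv r \<Rightarrow> (if r = 0 then {Cv 1} else {Lit r True, Lit r False})
   | MuP s \<Rightarrow> {litv (cl1 cs s), litv (cl2 cs s)}
   | Mu s \<Rightarrow> {litv (cl3 cs s), MuP s}
   | QPv s \<Rightarrow> {Mu s}
   | Qv s \<Rightarrow> {Mu s, QPv s}
   | Cv s \<Rightarrow> {Qv s, cnext n cs s})"

definition rk :: "vtx \<Rightarrow> nat" where
 "rk v = (case v of Tv \<Rightarrow> 0
   | Lit r b \<Rightarrow> (if b then 3 * r - 1 else 3 * r)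
   | Lv r \<Rightarrow> 3 * r + 1
   | MuP s \<Rightarrow> 3 * n + 4 * s - 2
   | Mu s \<Rightarrow> 3 * n + 4 * s - 1
   | QPv s \<Rightarrow> 3 * n + 4 * s
   | Qv s \<Rightarrow> 3 * n + 4 * s + 1
   | Cv s \<Rightarrow> 3 * n + 4 * mm + 2 + (mm - s))"

lemma rk_simps[simp]: "rk Tv = 0" "rk (Lit r True) = 3 * r - 1" "rk (Lit r False) = 3 * r"
  "rk (Lv r) = 3 * r + 1" "rk (MuP s) = 3 * n + 4 * s - 2" "rk (Mu s) = 3 * n + 4 * s - 1"
  "rk (QPv s) = 3 * n + 4 * s" "rk (Qv s) = 3 * n + 4 * s + 1" "rk (Cv s) = 3 * n + 4 * mm + 2 + (mm - s)"
  by (simp_all add: rk_def)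

lemma gf_cong: "(\<And>u. u \<in> inp v \<Longrightarrow> X u = X' u) \<Longrightarrow> gf X v = gf X' v"
  by (cases v) (auto simp: gf_def inp_def)

lemma G_in: "v \<in> VV \<Longrightarrow> G X v = gf X v" by (simp add: G_def)
lemma G_out: "v \<notin> VV \<Longrightarrow> G X v = False" by (simp add: G_def)

definition srt :: "vtx list \<Rightarrow> bool" where
  "srt w \<longleftrightarrow> sorted_wrt (\<lambda>u v. rk u < rk v) w \<and> set w \<subseteq> VV - {Lv 0}"

end

locale netwf = net +
  assumes wf: "wf_3cnf n cs" and m1: "1 \<le> length cs"
begin

lemma lit_rk: "s \<in> {1..mm} \<Longrightarrow> rk (litv (cl1 cs s)) \<le> 3 * n \<and> rk (litv (cl2 cs s)) \<le> 3 * n \<and> rk (litv (cl3 cs s)) \<le> 3 * n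
   \<and> rk (litv (cl1 cs s)) \<ge> 2 \<and> rk (litv (cl2 cs s)) \<ge> 2 \<and> rk (litv (cl3 cs s)) \<ge> 2"
  using wf_cl[OF wf, of s] unfolding litv_def by (auto simp: rk_def split: bool.splits)

lemma rk_inp: assumes "v \<in> VV" "v \<noteq> Lv 0" "u \<in> inp v" shows "rk u < rk v"
proof (cases v)
  case (MuP s) then show ?thesis using assms lit_rk[of s] by (auto simp: inp_def)
next
  case (Mu s) then show ?thesis using assms lit_rk[of s] by (auto simp: inp_def)
next
  case (Cv s) then show ?thesis using assms by (auto simp: inp_def cnext_def)
next
  case (Lit r b) then show ?thesis using assms by (cases b) (auto simp: inp_def)
qed (use assms in \<open>auto simp: inp_def split: if_splits\<close>)

lemma inp_V: assumes "v \<in> VV" shows "inp v \<subseteq> VV"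
proof (cases v)
  case (MuP s) then show ?thesis using assms wf_cl[OF wf, of s] by (auto simp: inp_def)
next
  case (Mu s) then show ?thesis using assms wf_cl[OF wf, of s] by (auto simp: inp_def)
next
  case (Cv s) then show ?thesis using assms by (auto simp: inp_def cnext_def)
qed (use assms m1 in \<open>auto simp: inp_def\<close>)

lemma WL:
  assumes "srt w"
  shows "(\<forall>v. v \<notin> set w \<longrightarrow> upd_word G w X v = X v) \<and> (\<forall>v\<in>set w. upd_word G w X v = gf (upd_word G w X) v)"
  using assms
proof (induction w arbitrary: X)
  case Nil then show ?case by (simp add: upd_word_Nil)
next
  case (Cons i w)
  have iV: "i \<in> VV" "i \<noteq> Lv 0" using Cons.prems by (auto simp: srt_def)
  have lt: "\<forall>u\<in>set w. rk i < rk u" using Cons.prems by (auto simp: srt_def)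
  have sw: "srt w" using Cons.prems by (auto simp: srt_def)
  define X1 where "X1 = X(i := gf X i)"
  have e: "upd_word G (i # w) X = upd_word G w X1"
    by (simp add: upd_word_Cons upd_at_def X1_def G_in[OF iV(1)])
  define Y where "Y = upd_word G w X1"
  note IH = Cons.IH[OF sw, of X1, folded Y_def]
  have inw: "i \<notin> set w" using lt by auto
  have Yi: "Y i = gf X i" using IH inw by (simp add: X1_def)
  have "gf Y i = gf X i"
  proof (rule gf_cong)
    fix u assume u: "u \<in> inp i"
    then have "rk u < rk i" using rk_inp iV by blast
    then have "u \<notin> set w" "u \<noteq> i" using lt by auto
    then show "Y u = X u" using IH by (simp add: X1_def)
  qed
  then show ?case using IH Yi unfolding e Y_def[symmetric] by (auto simp: X1_def)
qed

lemma AG: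
  assumes U: "U \<subseteq> VV - {Lv 0}" and eqY: "\<forall>v\<in>U. Y v = gf Y v" and eqY': "\<forall>v\<in>U. Y' v = gf Y' v"
    and cl: "\<forall>v\<in>U. inp v \<subseteq> U \<union> B" and agB: "\<forall>u\<in>B. Y u = Y' u"
  shows "v \<in> U \<Longrightarrow> Y v = Y' v"
proof (induction "rk v" arbitrary: v rule: less_induct)
  case less
  have "gf Y v = gf Y' v"
  proof (rule gf_cong)
    fix u assume u: "u \<in> inp v"
    then have "u \<in> U \<union> B" using cl less.prems by blast
    moreover have "rk u < rk v" using rk_inp u U less.prems by blast
    ultimately show "Y u = Y' u" using less.hyps agB by blast
  qed
  then show ?case using eqY eqY' less.prems by simp
qed

end

fun wseg :: "nat \<Rightarrow> nat \<Rightarrow> vtx list" where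
  "wseg i 0 = []"
| "wseg i (Suc k) = (if Suc k \<le> i then [] else wseg i k @ [Lit (Suc k) True, Lit (Suc k) False, Lv (Suc k)])"

fun wQ :: "nat \<Rightarrow> vtx list" where
  "wQ 0 = []"
| "wQ (Suc k) = wQ k @ [MuP (Suc k), Mu (Suc k), QPv (Suc k), Qv (Suc k)]"

fun wC :: "nat \<Rightarrow> vtx list" where
  "wC 0 = []"
| "wC (Suc k) = Cv (Suc k) # wC k"

lemma set_wseg: "v \<in> set (wseg i k) \<longleftrightarrow> (\<exists>r b. v = Lit r b \<and> i < r \<and> r \<le> k) \<or> (\<exists>r. v = Lv r \<and> i < r \<and> r \<le> k)"
  by (induction k) (auto simp: le_Suc_eq)

lemma set_wQ: "v \<in> set (wQ k) \<longleftrightarrow> (\<exists>s. 1 \<le> s \<and> s \<le> k \<and> (v = MuP s \<or> v = Mu s \<or> v = QPv s \<or> v = Qv s))"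
  by (induction k) (auto simp: le_Suc_eq)

lemma set_wC: "v \<in> set (wC k) \<longleftrightarrow> (\<exists>s. 1 \<le> s \<and> s \<le> k \<and> v = Cv s)"
  by (induction k) (auto simp: le_Suc_eq)

context net begin

lemma gf_Tv[simp]: "gf X Tv = a" by (simp add: gf_def)
lemma gf_L0[simp]: "gf X (Lv 0) = (\<not> X (Cv 1))" by (simp add: gf_def)

lemma srt_append: "srt (u @ w) \<longleftrightarrow> srt u \<and> srt w \<and> (\<forall>x\<in>set u. \<forall>y\<in>set w. rk x < rk y)"
  by (auto simp: srt_def sorted_wrt_append)

lemma srt_Cons: "srt (x # w) \<longleftrightarrow> x \<in> VV - {Lv 0} \<and> srt w \<and> (\<forall>y\<in>set w. rk x < rk y)"
  by (auto simp: srt_def)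

lemma rk_wseg: "v \<in> set (wseg i k) \<Longrightarrow> 3 * i + 2 \<le> rk v \<and> rk v \<le> 3 * k + 1"
  unfolding set_wseg by (auto split: bool.splits simp: rk_def)

lemma srt_wseg: "k \<le> n \<Longrightarrow> srt (wseg i k)"
proof (induction k)
  case 0 then show ?case by (simp add: srt_def)
next
  case (Suc k)
  show ?case
  proof (cases "Suc k \<le> i")
    case True then show ?thesis by (simp add: srt_def)
  next
    case False
    have "\<forall>x\<in>set (wseg i k). \<forall>y\<in>set [Lit (Suc k) True, Lit (Suc k) False, Lv (Suc k)]. rk x < rk y"
      using rk_wseg[of _ i k] by fastforce
    moreover have "srt [Lit (Suc k) True, Lit (Suc k) False, Lv (Suc k)]" using Suc.prems by (simp add: srt_def)
    ultimately show ?thesis using Suc False by (simp add: srt_append)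
  qed
qed

lemma rk_wQ: "v \<in> set (wQ k) \<Longrightarrow> 3 * n + 2 \<le> rk v \<and> rk v \<le> 3 * n + 4 * k + 1"
  unfolding set_wQ by auto

lemma srt_wQ: "k \<le> mm \<Longrightarrow> srt (wQ k)"
proof (induction k)
  case 0 then show ?case by (simp add: srt_def)
next
  case (Suc k)
  have "\<forall>x\<in>set (wQ k). \<forall>y\<in>set [MuP (Suc k), Mu (Suc k), QPv (Suc k), Qv (Suc k)]. rk x < rk y"
    using rk_wQ[of _ k] by fastforce
  moreover have "srt [MuP (Suc k), Mu (Suc k), QPv (Suc k), Qv (Suc k)]" using Suc.prems by (simp add: srt_def)
  ultimately show ?case using Suc by (simp add: srt_append)
qed

lemma rk_wC: "v \<in> set (wC k) \<Longrightarrow> k \<le> mm \<Longrightarrow> 3 * n + 4 * mm + 2 + (mm - k) \<le> rk v"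
  unfolding set_wC by auto

lemma srt_wC: "k \<le> mm \<Longrightarrow> srt (wC k)"
proof (induction k)
  case 0 then show ?case by (simp add: srt_def)
next
  case (Suc k)
  have "\<forall>y\<in>set (wC k). rk (Cv (Suc k)) < rk y" using Suc.prems by (auto simp: set_wC)
  then show ?case using Suc by (simp add: srt_Cons)
qed

definition rest where "rest = wseg 0 n @ wQ mm @ wC mm"
definition sw where "sw = [Tv, Lv 0] @ rest"

lemma srt_rest: "srt rest"
proof -
  have "\<forall>x\<in>set (wseg 0 n). \<forall>y\<in>set (wQ mm). rk x < rk y" using rk_wseg[of _ 0 n] rk_wQ[of _ mm] by fastforce
  moreover have "\<forall>x\<in>set (wseg 0 n @ wQ mm). \<forall>y\<in>set (wC mm). rk x < rk y"
    using rk_wseg[of _ 0 n] rk_wQ[of _ mm] rk_wC[of _ mm] by fastforce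
  ultimately show ?thesis unfolding rest_def using srt_wseg[of n 0] srt_wQ[of mm] srt_wC[of mm]
    by (simp only: srt_append append_assoc[symmetric])
qed

lemma set_rest: "set rest = VV - {Tv, Lv 0}"
proof -
  have "v \<in> set rest \<longleftrightarrow> v \<in> VV - {Tv, Lv 0}" for v
    unfolding rest_def set_append Un_iff set_wseg set_wQ set_wC
    by (cases v) auto
  then show ?thesis by blast
qed

lemma set_sw: "set sw = VV"
proof -
  have "Tv \<in> VV" "Lv 0 \<in> VV" by simp_all
  then show ?thesis unfolding sw_def set_append set_rest by auto
qed

definition solves :: "bool \<Rightarrow> (vtx \<Rightarrow> bool) \<Rightarrow> bool" where
  "solves y Y \<longleftrightarrow> (\<forall>v. v \<notin> VV \<longrightarrow> \<not> Y v) \<and> Y Tv = a \<and> Y (Lv 0) = y \<and> (\<forall>v\<in>VV - {Tv, Lv 0}. Y v = gf Y v)"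

end

context netwf begin

lemma sweep_solves:
  assumes X: "X \<in> states VV"
  shows "solves (\<not> X (Cv 1)) (upd_word G sw X)"
proof -
  define X1 where "X1 = X(Tv := a, Lv 0 := \<not> X (Cv 1))"
  have e1: "upd_at G (Lv 0) (upd_at G Tv X) = X1"
    by (simp add: upd_at_def G_in X1_def)
  have e: "upd_word G sw X = upd_word G rest X1"
    unfolding sw_def upd_word_append upd_word_Cons upd_word_Nil e1 ..
  define Y where "Y = upd_word G rest X1"
  have W1: "\<And>v. v \<notin> set rest \<Longrightarrow> Y v = X1 v" and W2: "\<And>v. v \<in> set rest \<Longrightarrow> Y v = gf Y v"
    using WL[OF srt_rest, of X1] unfolding Y_def by blast+
  have nr: "Tv \<notin> set rest" "Lv 0 \<notin> set rest" unfolding set_rest by blast+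
  show ?thesis unfolding solves_def e Y_def[symmetric]
  proof (intro conjI allI impI ballI)
    fix v assume v: "v \<notin> VV"
    then have "v \<notin> set rest" unfolding set_rest by blast
    then have "Y v = X1 v" by (rule W1)
    also have "\<dots> = X v" using v by (auto simp: X1_def)
    finally show "\<not> Y v" using X v by (simp add: states_def)
  next
    show "Y Tv = a" using W1[OF nr(1)] by (simp add: X1_def)
    show "Y (Lv 0) = (\<not> X (Cv 1))" using W1[OF nr(2)] by (simp add: X1_def)
  next
    fix v assume "v \<in> VV - {Tv, Lv 0}"
    then show "Y v = gf Y v" using W2 set_rest by blast
  qed
qed

lemma solves_unique:
  assumes "solves y Y" "solves y Y'" shows "Y = Y'"
proof
  fix v
  show "Y v = Y' v"
  proof (cases "v \<in> VV")
    case False then show ?thesis using assms by (auto simp: solves_def)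
  next
    case True
    show ?thesis
    proof (cases "v = Lv 0")
      case True then show ?thesis using assms by (simp add: solves_def)
    next
      case False
      have U: "VV - {Lv 0} \<subseteq> VV - {Lv 0}" by simp
      have eqg: "\<forall>v\<in>VV - {Lv 0}. Z v = gf Z v" if "solves y Z" for Z
      proof
        fix v assume v: "v \<in> VV - {Lv 0}"
        show "Z v = gf Z v"
        proof (cases "v = Tv")
          case True then show ?thesis using that by (simp add: solves_def)
        next
          case False then show ?thesis using that v by (simp add: solves_def)
        qed
      qed
      have eq: "\<forall>v\<in>VV - {Lv 0}. Y v = gf Y v" "\<forall>v\<in>VV - {Lv 0}. Y' v = gf Y' v"
        using eqg assms by blast+
      have cl: "\<forall>v\<in>VV - {Lv 0}. inp v \<subseteq> (VV - {Lv 0}) \<union> {Lv 0}" using inp_V by blast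
      have ag: "\<forall>u\<in>{Lv 0}. Y u = Y' u" using assms by (simp add: solves_def)
      show ?thesis using AG[OF U eq cl ag] True False by blast
    qed
  qed
qed

definition S :: "bool \<Rightarrow> vtx \<Rightarrow> bool" where
  "S y = (THE Y. solves y Y)"

lemma S_solves: "solves y (S y)"
proof -
  define X where "X = (\<lambda>v. v = Cv 1 \<and> \<not> y)"
  have X: "X \<in> states VV" using m1 by (auto simp: X_def states_def)
  have sx: "solves y (upd_word G sw X)" using sweep_solves[OF X] by (simp add: X_def)
  show ?thesis unfolding S_def by (rule theI[where P = "solves y", OF sx]) (simp add: solves_unique[OF _ sx])
qed

lemma sweep_S: "X \<in> states VV \<Longrightarrow> upd_word G sw X = S (\<not> X (Cv 1))"
  using solves_unique[OF sweep_solves S_solves] by blast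

lemma S_states: "S y \<in> states VV"
  using S_solves by (auto simp: solves_def states_def)

lemma S_eq: "v \<in> VV \<Longrightarrow> v \<noteq> Lv 0 \<Longrightarrow> S y v = gf (S y) v"
  using S_solves[of y] unfolding solves_def by (cases "v = Tv") auto

lemma S_L0[simp]: "S y (Lv 0) = y" and S_T[simp]: "S y Tv = a"
  using S_solves[of y] by (auto simp: solves_def)

end

context net begin
lemma gf_mono: "v \<noteq> Lv 0 \<Longrightarrow> (\<And>u. u \<in> inp v \<Longrightarrow> X u \<Longrightarrow> X' u) \<Longrightarrow> gf X v \<Longrightarrow> gf X' v"
proof (cases "v = Tv")
  case True show "gf X v \<Longrightarrow> gf X' v" unfolding \<open>v = Tv\<close> gf_Tv by assumption
next
  case False
  then show "v \<noteq> Lv 0 \<Longrightarrow> (\<And>u. u \<in> inp v \<Longrightarrow> X u \<Longrightarrow> X' u) \<Longrightarrow> gf X v \<Longrightarrow> gf X' v"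
    by (cases v) (auto simp: gf_def inp_def gate_def split: if_splits)
qed
end

locale netwf2 = netwf +
  assumes n1: "1 \<le> n"
begin

lemma S_out: "v \<notin> VV \<Longrightarrow> \<not> S y v"
  using S_states by (auto simp: states_def)

lemma S_Lit: "r \<in> {1..n} \<Longrightarrow> S y (Lit r b) = gate (opL r b) (S y (Lv (r - 1))) a"
  using S_eq[of "Lit r b" y] by (simp add: gf_def)
lemma S_Lv: "r \<in> {1..n} \<Longrightarrow> S y (Lv r) = gate (opl r) (S y (Lit r True)) (S y (Lit r False))"
  using S_eq[of "Lv r" y] by (simp add: gf_def)
lemma S_MuP: "s \<in> {1..mm} \<Longrightarrow> S y (MuP s) = gate (opP s) (S y (litv (cl1 cs s))) (S y (litv (cl2 cs s)))"
  using S_eq[of "MuP s" y] by (simp add: gf_def)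
lemma S_Mu: "s \<in> {1..mm} \<Longrightarrow> S y (Mu s) = gate (opM s) (S y (litv (cl3 cs s))) (S y (MuP s))"
  using S_eq[of "Mu s" y] by (simp add: gf_def)
lemma S_QPv: "s \<in> {1..mm} \<Longrightarrow> S y (QPv s) = S y (Mu s)"
  using S_eq[of "QPv s" y] by (simp add: gf_def)
lemma S_Qv: "s \<in> {1..mm} \<Longrightarrow> S y (Qv s) = S y (Mu s)"
  using S_eq[of "Qv s" y] S_QPv[of s y] by (simp add: gf_def)
lemma S_Cv: "s \<in> {1..mm} \<Longrightarrow> S y (Cv s) = gate (opC s) (S y (Qv s)) (S y (cnext n cs s))"
  using S_eq[of "Cv s" y] by (simp add: gf_def)

lemma S_mono: "S False v \<Longrightarrow> S True v"
proof (induction "rk v" arbitrary: v rule: less_induct)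
  case less
  show ?case
  proof (cases "v \<in> VV")
    case False then show ?thesis using less.prems S_out by blast
  next
    case vV: True
    show ?thesis
    proof (cases "v = Lv 0")
      case True then show ?thesis using less.prems by simp
    next
      case False
      have g: "gf (S False) v" using less.prems S_eq[OF vV False] by simp
      have "\<And>u. u \<in> inp v \<Longrightarrow> S False u \<Longrightarrow> S True u" using less.hyps rk_inp[OF vV False] by blast
      then have "gf (S True) v" using gf_mono[OF False _ g] by blast
      then show ?thesis using S_eq[OF vV False] by simp
    qed
  qed
qed

definition indep where "indep v \<longleftrightarrow> S True v = S False v"

lemma live_val: "\<not> indep v \<Longrightarrow> S y v = y"
  using S_mono[of v] by (cases y) (auto simp: indep_def)

lemma indep_val: "indep v \<Longrightarrow> S y v = S True v"
  by (cases y) (auto simp: indep_def)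

lemma upd_word_states: "X \<in> states VV \<Longrightarrow> upd_word G w X \<in> states VV"
proof (induction w arbitrary: X)
  case Nil then show ?case by (simp add: upd_word_Nil)
next
  case (Cons i w)
  have "upd_at G i X \<in> states VV" by (rule upd_at_states[OF Cons.prems G_states])
  then show ?case using Cons.IH by (simp add: upd_word_Cons)
qed

definition mergeable where
  "mergeable \<longleftrightarrow> (\<exists>w. set w \<subseteq> VV \<and> upd_word G w (S True) (Cv 1) = upd_word G w (S False) (Cv 1))"

lemma mergeable_sync: "mergeable \<Longrightarrow> synchronizing VV G"
proof -
  assume "mergeable"
  then obtain w where w: "set w \<subseteq> VV" and e: "upd_word G w (S True) (Cv 1) = upd_word G w (S False) (Cv 1)"
    unfolding mergeable_def by blast
  define c where "c = upd_word G w (S True) (Cv 1)"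
  have "upd_word G (sw @ w @ sw) X = S (\<not> c)" if X: "X \<in> states VV" for X
  proof -
    have "upd_word G (sw @ w @ sw) X = upd_word G sw (upd_word G w (S (\<not> X (Cv 1))))"
      by (simp add: upd_word_append sweep_S[OF X])
    also have "\<dots> = S (\<not> upd_word G w (S (\<not> X (Cv 1))) (Cv 1))"
      by (rule sweep_S[OF upd_word_states[OF S_states]])
    also have "upd_word G w (S (\<not> X (Cv 1))) (Cv 1) = c"
      using e by (cases "X (Cv 1)") (simp_all add: c_def)
    finally show ?thesis .
  qed
  moreover have "set (sw @ w @ sw) \<subseteq> VV" using w set_sw by auto
  ultimately show ?thesis unfolding synchronizing_def by blast
qed

lemma CH:
  assumes k: "1 \<le> k" "k \<le> mm"
    and e1: "\<And>s. 1 \<le> s \<Longrightarrow> s \<le> k \<Longrightarrow> Z1 (Cv s) = gf Z1 (Cv s)"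
    and e2: "\<And>s. 1 \<le> s \<Longrightarrow> s \<le> k \<Longrightarrow> Z2 (Cv s) = gf Z2 (Cv s)"
    and ck: "Z1 (Cv k) = Z2 (Cv k)" and q: "\<And>s. 1 \<le> s \<Longrightarrow> s < k \<Longrightarrow> Z1 (Qv s) = Z2 (Qv s)"
  shows "Z1 (Cv 1) = Z2 (Cv 1)"
proof (cases "k = 1")
  case True then show ?thesis using ck by simp
next
  case False
  define U where "U = {Cv s | s. 1 \<le> s \<and> s < k}"
  define B where "B = {Cv k} \<union> {Qv s | s. 1 \<le> s \<and> s < k}"
  have U: "U \<subseteq> VV - {Lv 0}" using k by (auto simp: U_def)
  have eq1: "\<forall>v\<in>U. Z1 v = gf Z1 v" and eq2: "\<forall>v\<in>U. Z2 v = gf Z2 v" using e1 e2 by (auto simp: U_def)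
  have cl: "\<forall>v\<in>U. inp v \<subseteq> U \<union> B"
  proof
    fix v assume "v \<in> U"
    then obtain s where s: "v = Cv s" "1 \<le> s" "s < k" by (auto simp: U_def)
    then have "s \<noteq> mm" using k by simp
    then show "inp v \<subseteq> U \<union> B" using s by (auto simp: inp_def cnext_def U_def B_def)
  qed
  have ag: "\<forall>u\<in>B. Z1 u = Z2 u" using ck q by (auto simp: B_def)
  have "Cv 1 \<in> U" using k False by (auto simp: U_def)
  then show ?thesis using AG[OF U eq1 eq2 cl ag] by blast
qed

end

context netwf2 begin

lemma MID:
  assumes srtW: "srt W" and live1: "\<not> indep (Cv 1)"
  shows "upd_word G (Lv 0 # W) (S y) (Lv 0) = (\<not> y)"
    and "v \<notin> set W \<Longrightarrow> v \<noteq> Lv 0 \<Longrightarrow> upd_word G (Lv 0 # W) (S y) v = S y v"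
    and "v \<in> set W \<Longrightarrow> upd_word G (Lv 0 # W) (S y) v = gf (upd_word G (Lv 0 # W) (S y)) v"
proof -
  have e: "upd_word G (Lv 0 # W) (S y) = upd_word G W ((S y)(Lv 0 := \<not> y))"
    using live_val[OF live1] by (simp add: upd_word_Cons upd_at_def G_in)
  have nL: "Lv 0 \<notin> set W" using srtW by (auto simp: srt_def)
  note W = WL[OF srtW, of "(S y)(Lv 0 := \<not> y)"]
  show "upd_word G (Lv 0 # W) (S y) (Lv 0) = (\<not> y)" using W nL unfolding e by simp
  show "v \<notin> set W \<Longrightarrow> v \<noteq> Lv 0 \<Longrightarrow> upd_word G (Lv 0 # W) (S y) v = S y v" using W unfolding e by simp
  show "v \<in> set W \<Longrightarrow> upd_word G (Lv 0 # W) (S y) v = gf (upd_word G (Lv 0 # W) (S y)) v" using W unfolding e by simp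
qed

lemma MID_agree:
  assumes srtW: "srt W" and live1: "\<not> indep (Cv 1)" and UW: "U \<subseteq> set W"
    and cl: "\<forall>v\<in>U. inp v \<subseteq> U \<union> {Lv 0, Tv}" and v: "v \<in> U"
  shows "upd_word G (Lv 0 # W) (S y) v = S (\<not> y) v"
proof -
  let ?Z = "upd_word G (Lv 0 # W) (S y)"
  have U: "U \<subseteq> VV - {Lv 0}" using srtW UW by (auto simp: srt_def)
  have eq1: "\<forall>v\<in>U. ?Z v = gf ?Z v" using MID(3)[OF srtW live1] UW by blast
  have eq2: "\<forall>v\<in>U. S (\<not> y) v = gf (S (\<not> y)) v" using S_eq U by blast
  have zt: "?Z Tv = a"
  proof (cases "Tv \<in> set W")
    case True then show ?thesis using MID(3)[OF srtW live1 True] by simp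
  next
    case False then show ?thesis using MID(2)[OF srtW live1 False] by simp
  qed
  have ag: "\<forall>u\<in>{Lv 0, Tv}. ?Z u = S (\<not> y) u" using MID(1)[OF srtW live1] zt by simp
  show ?thesis using AG[OF U eq1 eq2 cl ag v] .
qed

lemma wseg_in: "r \<in> {1..n} \<Longrightarrow> Lit r b \<in> set (wseg 0 n) \<and> Lv r \<in> set (wseg 0 n)"
  unfolding set_wseg by auto

lemma cl_wseg: "\<forall>v\<in>set (wseg i k). inp v \<subseteq> set (wseg i k) \<union> {Lv i, Tv}"
proof
  fix v assume "v \<in> set (wseg i k)"
  then consider r b where "v = Lit r b" "i < r" "r \<le> k" | r where "v = Lv r" "i < r" "r \<le> k"
    unfolding set_wseg by blast
  then show "inp v \<subseteq> set (wseg i k) \<union> {Lv i, Tv}"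
  proof cases
    case 1
    then show ?thesis by (cases "r - 1 = i") (auto simp: inp_def set_wseg)
  next
    case 2
    then show ?thesis by (auto simp: inp_def set_wseg)
  qed
qed

lemma lit_in_wseg: "s \<in> {1..mm} \<Longrightarrow> litv (cl1 cs s) \<in> set (wseg 0 n) \<and> litv (cl2 cs s) \<in> set (wseg 0 n) \<and> litv (cl3 cs s) \<in> set (wseg 0 n)"
  using wf_cl[OF wf, of s] unfolding set_wseg litv_def by auto

lemma Mu_live: "s \<in> {1..mm} \<Longrightarrow> indep (Qv s) \<longleftrightarrow> indep (Mu s)"
  by (simp add: indep_def S_Qv)

lemma case1a:
  assumes live1: "\<not> indep (Cv 1)" and s0: "s0 \<in> {1..mm}" and lq: "\<not> indep (Qv s0)"
    and below: "\<And>s. 1 \<le> s \<Longrightarrow> s < s0 \<Longrightarrow> indep (Qv s)" and cn: "indep (cnext n cs s0)"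
  shows mergeable
proof -
  define W where "W = wseg 0 n @ [MuP s0, Mu s0, Qv s0] @ wC s0"
  have srtW: "srt W"
  proof -
    have a1: "srt [MuP s0, Mu s0, Qv s0]" using s0 by (auto simp: srt_def)
    have "\<forall>x\<in>set (wseg 0 n). \<forall>y\<in>set [MuP s0, Mu s0, Qv s0]. rk x < rk y"
      using rk_wseg[of _ 0 n] s0 by fastforce
    moreover have "\<forall>x\<in>set (wseg 0 n @ [MuP s0, Mu s0, Qv s0]). \<forall>y\<in>set (wC s0). rk x < rk y"
      using rk_wseg[of _ 0 n] rk_wC[of _ s0] s0 by fastforce
    ultimately show ?thesis unfolding W_def using srt_wseg[of n 0] srt_wC[of s0] a1 s0
      by (simp only: srt_append append_assoc[symmetric]) simp
  qed
  define Z where "Z y = upd_word G (Lv 0 # W) (S y)" for y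
  define U where "U = set (wseg 0 n) \<union> {MuP s0, Mu s0}"
  have UW: "U \<subseteq> set W" by (auto simp: U_def W_def)
  have cl: "\<forall>v\<in>U. inp v \<subseteq> U \<union> {Lv 0, Tv}"
    using cl_wseg[of 0 n] lit_in_wseg[OF s0] unfolding U_def by (auto simp: inp_def)
  have ZU: "v \<in> U \<Longrightarrow> Z y v = S (\<not> y) v" for v y unfolding Z_def by (rule MID_agree[OF srtW live1 UW cl])
  have Zout: "v \<notin> set W \<Longrightarrow> v \<noteq> Lv 0 \<Longrightarrow> Z y v = S y v" for v y unfolding Z_def by (rule MID(2)[OF srtW live1])
  have Zeq: "v \<in> set W \<Longrightarrow> Z y v = gf (Z y) v" for v y unfolding Z_def by (rule MID(3)[OF srtW live1])
  have lmu: "\<not> indep (Mu s0)" using lq Mu_live[OF s0] by simp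
  have zm: "Z y (Mu s0) = (\<not> y)" for y using ZU[of "Mu s0"] live_val[OF lmu] by (simp add: U_def)
  have zqp: "Z y (QPv s0) = y" for y
    using Zout[of "QPv s0"] S_QPv[OF s0] live_val[OF lmu] by (simp add: W_def set_wseg set_wC)
  have zq: "Z y (Qv s0) = (\<not> opQ s0)" for y
    using Zeq[of "Qv s0" y] zm zqp by (simp add: W_def gf_def)
  have zcn: "Z y (cnext n cs s0) = S True (cnext n cs s0)" for y
  proof (cases "s0 = mm")
    case True
    then have "cnext n cs s0 \<in> U" using wseg_in[of n] n1 by (simp add: cnext_def U_def)
    then show ?thesis using ZU indep_val[OF cn] by simp
  next
    case False
    then have "cnext n cs s0 \<notin> set W" "cnext n cs s0 \<noteq> Lv 0" using s0
      by (auto simp: cnext_def W_def set_wseg set_wC)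
    then show ?thesis using Zout indep_val[OF cn] by simp
  qed
  have zc: "Z y (Cv s0) = gate (opC s0) (\<not> opQ s0) (S True (cnext n cs s0))" for y
    using Zeq[of "Cv s0" y] zq zcn s0 by (simp add: W_def gf_def set_wC)
  have "Z True (Cv 1) = Z False (Cv 1)"
  proof (rule CH[of s0])
    show "1 \<le> s0" "s0 \<le> mm" using s0 by auto
    show "Z True (Cv s) = gf (Z True) (Cv s)" "Z False (Cv s) = gf (Z False) (Cv s)" if "1 \<le> s" "s \<le> s0" for s
      using Zeq that by (auto simp: W_def set_wC)
    show "Z True (Cv s0) = Z False (Cv s0)" using zc by simp
    show "Z True (Qv s) = Z False (Qv s)" if "1 \<le> s" "s < s0" for s
    proof -
      have "Qv s \<notin> set W" using that by (auto simp: W_def set_wseg set_wC)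
      then show ?thesis using Zout below[OF that] by (simp add: indep_def)
    qed
  qed
  moreover have "set (Lv 0 # W) \<subseteq> VV" using srtW by (auto simp: srt_def)
  ultimately show ?thesis unfolding mergeable_def Z_def by blast
qed

end

context netwf2 begin

lemma case1b_lt:
  assumes live1: "\<not> indep (Cv 1)" and s0: "s0 \<in> {1..mm}" and lt: "s0 < mm" and lq: "\<not> indep (Qv s0)"
    and below: "\<And>s. 1 \<le> s \<Longrightarrow> s < s0 \<Longrightarrow> indep (Qv s)" and cn: "\<not> indep (Cv (Suc s0))"
  shows mergeable
proof -
  define W where "W = wseg 0 n @ [MuP s0, Mu s0, QPv s0, Qv s0] @ wC s0"
  have srtW: "srt W"
  proof -
    have a1: "srt [MuP s0, Mu s0, QPv s0, Qv s0]" using s0 by (auto simp: srt_def)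
    have "\<forall>x\<in>set (wseg 0 n). \<forall>y\<in>set [MuP s0, Mu s0, QPv s0, Qv s0]. rk x < rk y"
      using rk_wseg[of _ 0 n] s0 by fastforce
    moreover have "\<forall>x\<in>set (wseg 0 n @ [MuP s0, Mu s0, QPv s0, Qv s0]). \<forall>y\<in>set (wC s0). rk x < rk y"
      using rk_wseg[of _ 0 n] rk_wC[of _ s0] s0 by fastforce
    ultimately show ?thesis unfolding W_def using srt_wseg[of n 0] srt_wC[of s0] a1 s0
      by (simp only: srt_append append_assoc[symmetric]) simp
  qed
  define Z where "Z y = upd_word G (Lv 0 # W) (S y)" for y
  define U where "U = set (wseg 0 n) \<union> {MuP s0, Mu s0, QPv s0, Qv s0}"
  have UW: "U \<subseteq> set W" by (auto simp: U_def W_def)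
  have cl: "\<forall>v\<in>U. inp v \<subseteq> U \<union> {Lv 0, Tv}"
    using cl_wseg[of 0 n] lit_in_wseg[OF s0] unfolding U_def by (auto simp: inp_def)
  have ZU: "v \<in> U \<Longrightarrow> Z y v = S (\<not> y) v" for v y unfolding Z_def by (rule MID_agree[OF srtW live1 UW cl])
  have Zout: "v \<notin> set W \<Longrightarrow> v \<noteq> Lv 0 \<Longrightarrow> Z y v = S y v" for v y unfolding Z_def by (rule MID(2)[OF srtW live1])
  have Zeq: "v \<in> set W \<Longrightarrow> Z y v = gf (Z y) v" for v y unfolding Z_def by (rule MID(3)[OF srtW live1])
  have zq: "Z y (Qv s0) = (\<not> y)" for y using ZU[of "Qv s0"] live_val[OF lq] by (simp add: U_def)
  have zcn: "Z y (Cv (Suc s0)) = y" for y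
  proof -
    have "Cv (Suc s0) \<notin> set W" by (auto simp: W_def set_wseg set_wC)
    then show ?thesis using Zout live_val[OF cn] by simp
  qed
  have zc: "Z y (Cv s0) = (\<not> opC s0)" for y
    using Zeq[of "Cv s0" y] zq zcn s0 lt by (simp add: W_def gf_def set_wC cnext_def)
  have "Z True (Cv 1) = Z False (Cv 1)"
  proof (rule CH[of s0])
    show "1 \<le> s0" "s0 \<le> mm" using s0 by auto
    show "Z True (Cv s) = gf (Z True) (Cv s)" "Z False (Cv s) = gf (Z False) (Cv s)" if "1 \<le> s" "s \<le> s0" for s
      using Zeq that by (auto simp: W_def set_wC)
    show "Z True (Cv s0) = Z False (Cv s0)" using zc by simp
    show "Z True (Qv s) = Z False (Qv s)" if "1 \<le> s" "s < s0" for s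
    proof -
      have "Qv s \<notin> set W" using that by (auto simp: W_def set_wseg set_wC)
      then show ?thesis using Zout below[OF that] by (simp add: indep_def)
    qed
  qed
  moreover have "set (Lv 0 # W) \<subseteq> VV" using srtW by (auto simp: srt_def)
  ultimately show ?thesis unfolding mergeable_def Z_def by blast
qed

lemma case1b_eq:
  assumes live1: "\<not> indep (Cv 1)" and lq: "\<not> indep (Qv mm)"
    and below: "\<And>s. 1 \<le> s \<Longrightarrow> s < mm \<Longrightarrow> indep (Qv s)" and cn: "\<not> indep (Lv n)"
  shows mergeable
proof -
  have s0: "mm \<in> {1..mm}" using m1 by simp
  define W where "W = wseg 0 n @ wC mm"
  have srtW: "srt W"
  proof -
    have "\<forall>x\<in>set (wseg 0 n). \<forall>y\<in>set (wC mm). rk x < rk y"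
      using rk_wseg[of _ 0 n] rk_wC[of _ mm] by fastforce
    then show ?thesis unfolding W_def using srt_wseg[of n 0] srt_wC[of mm]
      by (simp only: srt_append)
  qed
  define Z where "Z y = upd_word G (Lv 0 # W) (S y)" for y
  define U where "U = set (wseg 0 n)"
  have UW: "U \<subseteq> set W" by (auto simp: U_def W_def)
  have cl: "\<forall>v\<in>U. inp v \<subseteq> U \<union> {Lv 0, Tv}"
    using cl_wseg[of 0 n] unfolding U_def by auto
  have ZU: "v \<in> U \<Longrightarrow> Z y v = S (\<not> y) v" for v y unfolding Z_def by (rule MID_agree[OF srtW live1 UW cl])
  have Zout: "v \<notin> set W \<Longrightarrow> v \<noteq> Lv 0 \<Longrightarrow> Z y v = S y v" for v y unfolding Z_def by (rule MID(2)[OF srtW live1])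
  have Zeq: "v \<in> set W \<Longrightarrow> Z y v = gf (Z y) v" for v y unfolding Z_def by (rule MID(3)[OF srtW live1])
  have zn: "Z y (Lv n) = (\<not> y)" for y using ZU[of "Lv n"] live_val[OF cn] wseg_in[of n] n1 by (simp add: U_def)
  have zq: "Z y (Qv mm) = y" for y
  proof -
    have "Qv mm \<notin> set W" by (auto simp: W_def set_wseg set_wC)
    then show ?thesis using Zout live_val[OF lq] by simp
  qed
  have zc: "Z y (Cv mm) = (\<not> opC mm)" for y
    using Zeq[of "Cv mm" y] zq zn m1 by (simp add: W_def gf_def set_wC cnext_def)
  have "Z True (Cv 1) = Z False (Cv 1)"
  proof (rule CH[of mm])
    show "1 \<le> mm" "mm \<le> mm" using m1 by auto
    show "Z True (Cv s) = gf (Z True) (Cv s)" "Z False (Cv s) = gf (Z False) (Cv s)" if "1 \<le> s" "s \<le> mm" for s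
      using Zeq that by (auto simp: W_def set_wC)
    show "Z True (Cv mm) = Z False (Cv mm)" using zc by simp
    show "Z True (Qv s) = Z False (Qv s)" if "1 \<le> s" "s < mm" for s
    proof -
      have "Qv s \<notin> set W" using that by (auto simp: W_def set_wseg set_wC)
      then show ?thesis using Zout below[OF that] by (simp add: indep_def)
    qed
  qed
  moreover have "set (Lv 0 # W) \<subseteq> VV" using srtW by (auto simp: srt_def)
  ultimately show ?thesis unfolding mergeable_def Z_def by blast
qed

lemma case2:
  assumes live1: "\<not> indep (Cv 1)" and allq: "\<And>s. s \<in> {1..mm} \<Longrightarrow> indep (Qv s)"
    and r: "r \<in> {1..n}" and l1: "\<not> indep (Lit r True)" and l2: "\<not> indep (Lit r False)"
  shows mergeable
proof -
  define W where "W = wseg 0 (r - 1) @ [Lit r True, Lv r] @ wseg r n @ wC mm"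
  have srtW: "srt W"
  proof -
    have a1: "srt [Lit r True, Lv r]" using r by (auto simp: srt_def)
    have b1: "\<forall>x\<in>set (wseg 0 (r - 1)). \<forall>y\<in>set [Lit r True, Lv r]. rk x < rk y"
      using rk_wseg[of _ 0 "r - 1"] r by fastforce
    have b2: "\<forall>x\<in>set (wseg 0 (r - 1) @ [Lit r True, Lv r]). \<forall>y\<in>set (wseg r n). rk x < rk y"
      using rk_wseg[of _ 0 "r - 1"] rk_wseg[of _ r n] r by fastforce
    have b3: "\<forall>x\<in>set (wseg 0 (r - 1) @ [Lit r True, Lv r] @ wseg r n). \<forall>y\<in>set (wC mm). rk x < rk y"
      using rk_wseg[of _ 0 "r - 1"] rk_wseg[of _ r n] rk_wC[of _ mm] r by fastforce
    have "srt (wseg 0 (r - 1))" "srt (wseg r n)" using srt_wseg r by auto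
    then show ?thesis unfolding W_def using srt_wC[of mm] a1 b1 b2 b3
      by (simp only: srt_append append_assoc[symmetric])
  qed
  define Z where "Z y = upd_word G (Lv 0 # W) (S y)" for y
  define U where "U = set (wseg 0 (r - 1)) \<union> {Lit r True}"
  have UW: "U \<subseteq> set W" by (auto simp: U_def W_def)
  have cl: "\<forall>v\<in>U. inp v \<subseteq> U \<union> {Lv 0, Tv}"
  proof -
    have "inp (Lit r True) \<subseteq> U \<union> {Lv 0, Tv}"
      using r by (cases "r - 1 = 0") (auto simp: inp_def U_def set_wseg)
    then show ?thesis using cl_wseg[of 0 "r - 1"] unfolding U_def by auto
  qed
  have ZU: "v \<in> U \<Longrightarrow> Z y v = S (\<not> y) v" for v y unfolding Z_def by (rule MID_agree[OF srtW live1 UW cl])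
  have Zout: "v \<notin> set W \<Longrightarrow> v \<noteq> Lv 0 \<Longrightarrow> Z y v = S y v" for v y unfolding Z_def by (rule MID(2)[OF srtW live1])
  have Zeq: "v \<in> set W \<Longrightarrow> Z y v = gf (Z y) v" for v y unfolding Z_def by (rule MID(3)[OF srtW live1])
  have z1: "Z y (Lit r True) = (\<not> y)" for y using ZU[of "Lit r True"] live_val[OF l1] by (simp add: U_def)
  have z2: "Z y (Lit r False) = y" for y
  proof -
    have "Lit r False \<notin> set W" using r by (auto simp: W_def set_wseg set_wC)
    then show ?thesis using Zout live_val[OF l2] by simp
  qed
  have z3: "Z y (Lv r) = (\<not> opl r)" for y
    using Zeq[of "Lv r" y] z1 z2 r by (simp add: W_def gf_def)
  have zT: "Z y Tv = a" for y
  proof -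
    have "Tv \<notin> set W" by (auto simp: W_def set_wseg set_wC)
    then show ?thesis using Zout by simp
  qed
  have zn: "Z True (Lv n) = Z False (Lv n)"
  proof (cases "r = n")
    case True then show ?thesis using z3 by simp
  next
    case False
    define U2 where "U2 = set (wseg r n)"
    have U2: "U2 \<subseteq> VV - {Lv 0}" using srtW by (auto simp: U2_def W_def srt_def)
    have e1: "\<forall>v\<in>U2. Z True v = gf (Z True) v" "\<forall>v\<in>U2. Z False v = gf (Z False) v"
      using Zeq by (auto simp: U2_def W_def)
    have cl2: "\<forall>v\<in>U2. inp v \<subseteq> U2 \<union> {Lv r, Tv}" using cl_wseg[of r n] by (simp add: U2_def)
    have ag: "\<forall>u\<in>{Lv r, Tv}. Z True u = Z False u" using z3 zT by simp
    have "Lv n \<in> U2" using False r by (auto simp: U2_def set_wseg)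
    then show ?thesis using AG[OF U2 e1 cl2 ag] by blast
  qed
  have zqs: "Z True (Qv s) = Z False (Qv s)" if "s \<in> {1..mm}" for s
  proof -
    have "Qv s \<notin> set W" by (auto simp: W_def set_wseg set_wC)
    then show ?thesis using Zout allq[OF that] by (simp add: indep_def)
  qed
  have zc: "Z True (Cv mm) = Z False (Cv mm)"
    using Zeq[of "Cv mm" True] Zeq[of "Cv mm" False] zn zqs[of mm] m1 by (simp add: W_def gf_def set_wC cnext_def)
  have "Z True (Cv 1) = Z False (Cv 1)"
  proof (rule CH[of mm])
    show "1 \<le> mm" "mm \<le> mm" using m1 by auto
    show "Z True (Cv s) = gf (Z True) (Cv s)" "Z False (Cv s) = gf (Z False) (Cv s)" if "1 \<le> s" "s \<le> mm" for s
      using Zeq that by (auto simp: W_def set_wC)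
    show "Z True (Cv mm) = Z False (Cv mm)" by (rule zc)
    show "Z True (Qv s) = Z False (Qv s)" if "1 \<le> s" "s < mm" for s using zqs that by auto
  qed
  moreover have "set (Lv 0 # W) \<subseteq> VV" using srtW by (auto simp: srt_def)
  ultimately show ?thesis unfolding mergeable_def Z_def by blast
qed

end

context netwf2 begin

lemma lv_prop: assumes i: "indep (Lv r)" and rn: "r < n" shows "indep (Lv (Suc r))"
proof -
  have r1: "Suc r \<in> {1..n}" using rn by simp
  have e: "S y (Lv (Suc r)) = gate (opl (Suc r)) (gate (opL (Suc r) True) (S y (Lv r)) a) (gate (opL (Suc r) False) (S y (Lv r)) a)" for y
    using S_Lv[OF r1, of y] S_Lit[OF r1] by simp
  have "S True (Lv r) = S False (Lv r)" using i by (simp add: indep_def)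
  then show ?thesis unfolding indep_def e by simp
qed

lemma lv_prop2: "indep (Lv r) \<Longrightarrow> r \<le> j \<Longrightarrow> j \<le> n \<Longrightarrow> indep (Lv j)"
proof (induction j)
  case 0 then show ?case by simp
next
  case (Suc j)
  show ?case
  proof (cases "r = Suc j")
    case True then show ?thesis using Suc.prems by simp
  next
    case False
    then have "indep (Lv j)" using Suc by simp
    then show ?thesis using lv_prop Suc.prems by simp
  qed
qed

lemma lit_live: assumes r: "r \<in> {1..n}" and l: "\<not> indep (Lv r)" shows "\<not> indep (Lit r True) \<or> \<not> indep (Lit r False)"
proof (rule ccontr)
  assume "\<not> ?thesis"
  then have "S True (Lit r True) = S False (Lit r True)" "S True (Lit r False) = S False (Lit r False)"
    by (simp_all add: indep_def)
  then have "S True (Lv r) = S False (Lv r)" unfolding S_Lv[OF r] by simp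
  then show False using l by (simp add: indep_def)
qed

lemma unsat_mergeable:
  assumes unsat: "\<not> satisfiable n cs"
  shows mergeable
proof (cases "indep (Cv 1)")
  case True
  then show ?thesis unfolding mergeable_def by (intro exI[of _ "[]"]) (simp add: upd_word_Nil indep_def)
next
  case live1: False
  show ?thesis
  proof (cases "\<exists>s\<in>{1..mm}. \<not> indep (Qv s)")
    case True
    define s0 where "s0 = (LEAST s. s \<in> {1..mm} \<and> \<not> indep (Qv s))"
    have ex: "\<exists>s. s \<in> {1..mm} \<and> \<not> indep (Qv s)" using True by blast
    have s0: "s0 \<in> {1..mm}" "\<not> indep (Qv s0)" using LeastI_ex[OF ex] unfolding s0_def by blast+
    have below: "indep (Qv s)" if "1 \<le> s" "s < s0" for s
    proof (rule ccontr)
      assume "\<not> indep (Qv s)"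
      moreover have "s \<in> {1..mm}" using that s0 by auto
      ultimately have "s0 \<le> s" unfolding s0_def by (intro Least_le) blast
      then show False using that by simp
    qed
    show ?thesis
    proof (cases "indep (cnext n cs s0)")
      case True
      then show ?thesis using case1a[OF live1 s0 below] by blast
    next
      case False
      show ?thesis
      proof (cases "s0 = mm")
        case True
        then show ?thesis using case1b_eq[OF live1] s0 below False by (simp add: cnext_def)
      next
        case ne: False
        then have "s0 < mm" using s0 by simp
        then show ?thesis using case1b_lt[OF live1 s0(1) _ s0(2) below] False ne by (simp add: cnext_def)
      qed
    qed
  next
    case False
    then have allq: "\<And>s. s \<in> {1..mm} \<Longrightarrow> indep (Qv s)" by blast
    have lvn: "\<not> indep (Lv n)"
    proof
      assume ln: "indep (Lv n)"
      have "S True (Cv 1) = S False (Cv 1)"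
      proof (rule CH[of mm])
        show "1 \<le> mm" "mm \<le> mm" using m1 by auto
        show "S True (Cv s) = gf (S True) (Cv s)" "S False (Cv s) = gf (S False) (Cv s)" if "1 \<le> s" "s \<le> mm" for s
          using S_eq that by auto
        show "S True (Cv mm) = S False (Cv mm)"
          using S_Cv[of mm True] S_Cv[of mm False] allq[of mm] ln m1 by (simp add: indep_def cnext_def)
        show "S True (Qv s) = S False (Qv s)" if "1 \<le> s" "s < mm" for s
          using allq[of s] that by (simp add: indep_def)
      qed
      then show False using live1 by (simp add: indep_def)
    qed
    have lall: "\<not> indep (Lv r)" if "r \<le> n" for r using lv_prop2[of r n] lvn that by auto
    show ?thesis
    proof (cases "\<exists>r\<in>{1..n}. \<not> indep (Lit r True) \<and> \<not> indep (Lit r False)")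
      case True
      then obtain r where "r \<in> {1..n}" "\<not> indep (Lit r True)" "\<not> indep (Lit r False)" by blast
      then show ?thesis using case2[OF live1 allq] by blast
    next
      case False
      define z where "z r = indep (Lit r True)" for r
      have litl: "\<not> indep (litv l)" if "fst l \<in> {1..n}" "\<not> sat_lit z l" for l
      proof -
        obtain r b where l: "l = (r, b)" by (cases l)
        have r: "r \<in> {1..n}" using that l by simp
        show ?thesis
        proof (cases b)
          case True then show ?thesis using that l by (simp add: sat_lit_def z_def litv_def)
        next
          case b: False
          then have "indep (Lit r True)" using that l by (simp add: sat_lit_def z_def)
          then have "\<not> indep (Lit r False)" using lit_live[OF r lall] r by auto
          then show ?thesis using l b by (simp add: litv_def)
        qed
      qed
      have "satisfiable n cs"
        unfolding satisfiable_def
      proof (intro exI[of _ z] ballI)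
        fix s assume s: "s \<in> {1..mm}"
        show "sat_lit z (cl1 cs s) \<or> sat_lit z (cl2 cs s) \<or> sat_lit z (cl3 cs s)"
        proof (rule ccontr)
          assume "\<not> ?thesis"
          then have l: "\<not> indep (litv (cl1 cs s))" "\<not> indep (litv (cl2 cs s))" "\<not> indep (litv (cl3 cs s))"
            using litl wf_cl[OF wf s] by auto
          have "S y (Qv s) = y" for y
            using S_Qv[OF s] S_Mu[OF s] S_MuP[OF s] live_val[OF l(1)] live_val[OF l(2)] live_val[OF l(3)]
            by simp
          then have "\<not> indep (Qv s)" by (simp add: indep_def)
          then show False using allq[OF s] by simp
        qed
      qed
      then show ?thesis using unsat by simp
    qed
  qed
qed

end

theorem theorem7:
  fixes n :: nat and cs :: "clause list"
  assumes "n \<ge> 2" and "length cs \<ge> 1" and "wf_3cnf n cs"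
  shows "\<not> satisfiable n cs \<longleftrightarrow>
         (\<forall>f. BN_on (F_verts n cs) (F_arcs n cs) f \<longrightarrow> synchronizing (F_verts n cs) f)"
proof
  assume unsat: "\<not> satisfiable n cs"
  show "\<forall>f. BN_on (F_verts n cs) (F_arcs n cs) f \<longrightarrow> synchronizing (F_verts n cs) f"
  proof (intro allI impI)
    fix f assume bn: "BN_on (F_verts n cs) (F_arcs n cs) f"
    obtain a opL opl opP opM opQ opC where
      fG: "\<forall>x\<in>states (F_verts n cs). f x = net.G n cs a opL opl opP opM opQ opC x"
      using BN_is_net[OF assms(3) assms(2) bn] by blast
    interpret N: netwf2 n cs a opL opl opP opM opQ opC
      using assms by unfold_locales auto
    have "synchronizing (F_verts n cs) N.G"
      using N.mergeable_sync[OF N.unsat_mergeable[OF unsat]] .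
    moreover have "\<forall>x\<in>states (F_verts n cs). N.G x \<in> states (F_verts n cs)" using N.G_states by blast
    ultimately show "synchronizing (F_verts n cs) f" using sync_transfer[OF fG] by blast
  qed
next
  assume allsync: "\<forall>f. BN_on (F_verts n cs) (F_arcs n cs) f \<longrightarrow> synchronizing (F_verts n cs) f"
  show "\<not> satisfiable n cs"
  proof
    assume "satisfiable n cs"
    then obtain z where z: "\<forall>s\<in>{1..length cs}. sat_lit z (cl1 cs s) \<or> sat_lit z (cl2 cs s) \<or> sat_lit z (cl3 cs s)"
      unfolding satisfiable_def by blast
    have "BN_on (F_verts n cs) (F_arcs n cs) (net.G n cs True (zops z) (\<lambda>_. True) (\<lambda>_. False) (\<lambda>_. False) (\<lambda>_. True) (\<lambda>_. True))"
      by (rule net.G_BN[OF assms(3) assms(2)])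
    then have "synchronizing (F_verts n cs) (net.G n cs True (zops z) (\<lambda>_. True) (\<lambda>_. False) (\<lambda>_. False) (\<lambda>_. True) (\<lambda>_. True))"
      using allsync by blast
    then show False using sat_nonsync[OF assms(3) assms(2) z] by blast
  qed
qed

end
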